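(* There exists $c\in(0,1/64)$ such that for any $\delta>0$ and $A\ge4c\sqrt{\delta}$, for all $n$ large enough, \[ \mathbb{P}\bigl(|\mathrm{B}_{\delta n}|\le c\delta\sqrt n/A\bigr)\le\exp(-A\sqrt n), \] where $\mathrm{B}_t:=\{x\in\mathbb{Z}:\mathrm{T}(0,x)\le t\}$. Consequently, for any $\eta,A>0$ with $A\ge32c\eta$, for all $n$ large enough, \[ \mathbb{P}\Bigl(\mathrm{T}(0,\lfloor\eta\sqrt n\rfloor)\wedge\mathrm{T}(0,-\lfloor\eta\sqrt n\rfloor)\ge 2A\eta n/c\Bigr)\le\exp(-A\sqrt n). \]
   Context: Frog model on $\mathbb{Z}$: let $(S^x_n)_{n\ge 0}$, $x\in\mathbb{Z}$, be independent simple symmetric random walks on $\mathbb{Z}$ with $S^x_0=x$, under $\mathbb{P}$. For $x,y\in\mathbb{Z}$, $t(x,y):=\inf\{n\ge 0: S^x_n=y\}$ and $\mathrm{T}(x,y):=\inf\{\sum_{i=0}^{k-1}t(x_i,x_{i+1}) : k\ge 1,\ x_0,\dots,x_k\in\mathbb{Z},\ x_0=x,\ x_k=y\}$. $|\cdot|$ denotes cardinality. *)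

theory Defs
  imports "HOL-Probability.Probability"
begin

text \<open>Probability space: i.i.d. steps xi(x,k) uniform on {-1,1}, indexed by
  the walk label x :: int and the time k :: nat.\<close>

definition frog_space :: "((int \<times> nat) \<Rightarrow> int) measure" where
  "frog_space = PiM (UNIV :: (int \<times> nat) set) (\<lambda>_. measure_pmf (pmf_of_set {-1, 1::int}))"

definition S :: "int \<Rightarrow> nat \<Rightarrow> ((int \<times> nat) \<Rightarrow> int) \<Rightarrow> int" where
  "S x n \<omega> = x + (\<Sum>k<n. \<omega> (x, k))"

definition hit :: "int \<Rightarrow> int \<Rightarrow> ((int \<times> nat) \<Rightarrow> int) \<Rightarrow> enat" where
  "hit x y \<omega> = (if \<exists>n. S x n \<omega> = y then enat (LEAST n. S x n \<omega> = y) else \<infinity>)"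

definition T :: "int \<Rightarrow> int \<Rightarrow> ((int \<times> nat) \<Rightarrow> int) \<Rightarrow> enat" where
  "T x y \<omega> = (INF xs \<in> {xs. length xs \<ge> 2 \<and> hd xs = x \<and> last xs = y}.
                  \<Sum>i<length xs - 1. hit (xs ! i) (xs ! Suc i) \<omega>)"

definition B :: "real \<Rightarrow> ((int \<times> nat) \<Rightarrow> int) \<Rightarrow> int set" where
  "B t \<omega> = {x. ereal_of_enat (T 0 x \<omega>) \<le> ereal t}"

end

theory Submission
  imports Defs "HOL-Real_Asymp.Real_Asymp"
begin


definition Om :: "((int \<times> nat) \<Rightarrow> int) set" where
  "Om = {\<omega>. \<forall>i. \<omega> i \<in> {-1, 1}}"

fun pc :: "((int \<times> nat) \<Rightarrow> int) \<Rightarrow> int list \<Rightarrow> enat" where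
  "pc \<omega> (a # b # rest) = hit a b \<omega> + pc \<omega> (b # rest)"
| "pc \<omega> _ = 0"

definition PP :: "int \<Rightarrow> int \<Rightarrow> int list set" where
  "PP x y = {xs. length xs \<ge> 2 \<and> hd xs = x \<and> last xs = y}"

lemma pc_eq: "(\<Sum>i<length xs - 1. hit (xs ! i) (xs ! Suc i) \<omega>) = pc \<omega> xs"
proof (induction \<omega> xs rule: pc.induct)
  case (1 \<omega> a b rest)
  have "(\<Sum>i<length (a # b # rest) - 1. hit ((a # b # rest) ! i) ((a # b # rest) ! Suc i) \<omega>)
      = (\<Sum>i<Suc (length rest). hit ((a # b # rest) ! i) ((a # b # rest) ! Suc i) \<omega>)" by simp
  also have "\<dots> = hit a b \<omega> + (\<Sum>i<length rest. hit ((b # rest) ! i) ((b # rest) ! Suc i) \<omega>)"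
    by (subst sum.lessThan_Suc_shift) simp
  also have "(\<Sum>i<length rest. hit ((b # rest) ! i) ((b # rest) ! Suc i) \<omega>) = pc \<omega> (b # rest)"
    using 1 by simp
  finally show ?case by simp
qed auto

lemma T_pc: "T x y \<omega> = (INF xs \<in> PP x y. pc \<omega> xs)"
  unfolding T_def PP_def pc_eq ..

lemma T_le: "xs \<in> PP x y \<Longrightarrow> T x y \<omega> \<le> pc \<omega> xs"
  unfolding T_pc by (rule INF_lower)

lemma T_ex: "\<exists>xs\<in>PP x y. T x y \<omega> = pc \<omega> xs"
proof -
  have "[x, y] \<in> PP x y" by (simp add: PP_def)
  then have "T x y \<omega> \<in> (\<lambda>xs. pc \<omega> xs) ` PP x y"
    unfolding T_pc by (intro wellorder_InfI) blast
  then show ?thesis by auto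
qed

lemma hit_self: "hit x x \<omega> = 0"
proof -
  have "S x 0 \<omega> = x" by (simp add: S_def)
  then show ?thesis unfolding hit_def by (auto intro!: Least_eq_0 simp: zero_enat_def)
qed

lemma hit_le: "S x n \<omega> = y \<Longrightarrow> hit x y \<omega> \<le> enat n"
  unfolding hit_def by (auto intro: Least_le)

lemma hit_enat: "hit x y \<omega> = enat n \<Longrightarrow> S x n \<omega> = y"
  unfolding hit_def by (auto split: if_splits intro: LeastI)

lemma T_le_hit: "T x y \<omega> \<le> hit x y \<omega>"
proof -
  have "[x, y] \<in> PP x y" by (simp add: PP_def)
  then show ?thesis using T_le[of "[x,y]" x y \<omega>] by simp
qed

lemma T_refl: "T x x \<omega> = 0"
  using T_le_hit[of x x \<omega>] by (simp add: hit_self)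

lemma pc_append: "xs \<noteq> [] \<Longrightarrow> pc \<omega> (xs @ [z]) = pc \<omega> xs + hit (last xs) z \<omega>"
proof (induction xs)
  case Nil then show ?case by simp
next
  case (Cons a xs)
  show ?case
  proof (cases xs)
    case Nil then show ?thesis by simp
  next
    case (Cons b rest)
    with Cons.IH show ?thesis by (simp add: add.assoc)
  qed
qed

lemma T_append: "T x z \<omega> \<le> T x y \<omega> + hit y z \<omega>"
proof -
  obtain xs where xs: "xs \<in> PP x y" "T x y \<omega> = pc \<omega> xs" using T_ex by blast
  then have ne: "xs \<noteq> []" by (auto simp: PP_def)
  have "xs @ [z] \<in> PP x z" using xs ne by (auto simp: PP_def)
  then have "T x z \<omega> \<le> pc \<omega> (xs @ [z])" by (rule T_le)
  also have "\<dots> = T x y \<omega> + hit y z \<omega>" using xs ne by (simp add: pc_append PP_def)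
  finally show ?thesis .
qed

lemma T_prepend: "T a z \<omega> \<le> hit a b \<omega> + T b z \<omega>"
proof -
  obtain xs where xs: "xs \<in> PP b z" "T b z \<omega> = pc \<omega> xs" using T_ex by blast
  then obtain c rest where xs_eq: "xs = b # c # rest"
    by (cases xs; cases "tl xs") (auto simp: PP_def)
  have "a # xs \<in> PP a z" using xs xs_eq by (auto simp: PP_def)
  then have "T a z \<omega> \<le> pc \<omega> (a # xs)" by (rule T_le)
  also have "\<dots> = hit a b \<omega> + T b z \<omega>" using xs xs_eq by simp
  finally show ?thesis .
qed

lemma S_Suc: "S x (Suc n) \<omega> = S x n \<omega> + \<omega> (x, n)"
  by (simp add: S_def)

lemma S_0: "S x 0 \<omega> = x"
  by (simp add: S_def)

lemma S_step: "\<omega> \<in> Om \<Longrightarrow> \<bar>S x (Suc n) \<omega> - S x n \<omega>\<bar> = 1"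
  by (auto simp: S_Suc Om_def) (metis abs_neg_one abs_one insertE singletonD)

lemma S_dist: "\<omega> \<in> Om \<Longrightarrow> \<bar>S x n \<omega> - x\<bar> \<le> int n"
proof (induction n)
  case 0 then show ?case by (simp add: S_0)
next
  case (Suc n)
  have "\<bar>S x (Suc n) \<omega> - S x n \<omega>\<bar> = 1" using S_step Suc by blast
  with Suc show ?case by linarith
qed

lemma hit_ge: "\<omega> \<in> Om \<Longrightarrow> enat (nat \<bar>y - x\<bar>) \<le> hit x y \<omega>"
proof (cases "hit x y \<omega>")
  case (enat n)
  assume "\<omega> \<in> Om"
  then have "\<bar>S x n \<omega> - x\<bar> \<le> int n" by (rule S_dist)
  with hit_enat[OF enat] show ?thesis using enat by simp
qed simp

lemma pc_dist: "\<omega> \<in> Om \<Longrightarrow> xs \<noteq> [] \<Longrightarrow> enat (nat \<bar>last xs - hd xs\<bar>) \<le> pc \<omega> xs"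
proof (induction xs)
  case Nil then show ?case by simp
next
  case (Cons a xs)
  show ?case
  proof (cases xs)
    case Nil then show ?thesis by (simp add: zero_enat_def)
  next
    case (Cons b rest)
    have IH: "enat (nat \<bar>last xs - b\<bar>) \<le> pc \<omega> xs" using Cons.IH Cons.prems Cons by simp
    have h: "enat (nat \<bar>b - a\<bar>) \<le> hit a b \<omega>" using hit_ge Cons.prems by blast
    have "enat (nat \<bar>last xs - a\<bar>) \<le> enat (nat \<bar>b - a\<bar>) + enat (nat \<bar>last xs - b\<bar>)"
      by simp
    also have "\<dots> \<le> hit a b \<omega> + pc \<omega> xs" using h IH by (rule add_mono)
    finally show ?thesis using Cons by simp
  qed
qed

lemma T_dist: "\<omega> \<in> Om \<Longrightarrow> enat (nat \<bar>y - x\<bar>) \<le> T x y \<omega>"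
proof -
  assume om: "\<omega> \<in> Om"
  obtain xs where xs: "xs \<in> PP x y" "T x y \<omega> = pc \<omega> xs" using T_ex by blast
  then have "xs \<noteq> []" by (auto simp: PP_def)
  from pc_dist[OF om this] xs show ?thesis by (simp add: PP_def)
qed

lemma ivt_int:
  fixes f :: "nat \<Rightarrow> int"
  shows "(\<And>k. k < n \<Longrightarrow> \<bar>f (Suc k) - f k\<bar> \<le> 1) \<Longrightarrow> f 0 \<le> z \<Longrightarrow> z \<le> f n \<Longrightarrow> \<exists>k\<le>n. f k = z"
proof (induction n)
  case 0 then show ?case by auto
next
  case (Suc n)
  show ?case
  proof (cases "z \<le> f n")
    case True
    with Suc show ?thesis by (metis le_Suc_eq less_Suc_eq)
  next
    case False
    have "\<bar>f (Suc n) - f n\<bar> \<le> 1" using Suc.prems by simp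
    then have "f (Suc n) = z" using False Suc.prems by linarith
    then show ?thesis by blast
  qed
qed

lemma hit_ivt:
  assumes om: "\<omega> \<in> Om" and h: "hit x y \<omega> = enat n" and z: "min x y \<le> z" "z \<le> max x y"
  shows "hit x z \<omega> \<le> enat n"
proof -
  have Sn: "S x n \<omega> = y" using hit_enat[OF h] .
  have st: "\<And>k. \<bar>S x (Suc k) \<omega> - S x k \<omega>\<bar> \<le> 1" using S_step[OF om] by simp
  have "\<exists>k\<le>n. S x k \<omega> = z"
  proof (cases "x \<le> y")
    case True
    then show ?thesis using z Sn st
      by (intro ivt_int[where f="\<lambda>k. S x k \<omega>"]) (auto simp: S_0)
  next
    case False
    have "\<exists>k\<le>n. - S x k \<omega> = - z"
      using False z Sn st
      by (intro ivt_int[where f="\<lambda>k. - S x k \<omega>"]) (auto simp: S_0 abs_minus_commute)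
    then show ?thesis by auto
  qed
  then obtain k where "k \<le> n" "S x k \<omega> = z" by blast
  then show ?thesis using hit_le[of x k \<omega> z] by (meson enat_ord_simps(1) order_trans)
qed

lemma path_ivt:
  "\<omega> \<in> Om \<Longrightarrow> length xs \<ge> 2 \<Longrightarrow> min (hd xs) (last xs) \<le> z \<Longrightarrow> z \<le> max (hd xs) (last xs)
    \<Longrightarrow> T (hd xs) z \<omega> \<le> pc \<omega> xs"
proof (induction xs)
  case Nil then show ?case by simp
next
  case (Cons a xs)
  then obtain b rest where xs: "xs = b # rest" by (cases xs) auto
  show ?case
  proof (cases "min a b \<le> z \<and> z \<le> max a b")
    case True
    show ?thesis
    proof (cases "hit a b \<omega>")
      case (enat n)
      have "T a z \<omega> \<le> hit a z \<omega>" by (rule T_le_hit)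
      also have "\<dots> \<le> enat n" using hit_ivt[OF Cons.prems(1) enat] True by auto
      also have "\<dots> \<le> pc \<omega> (a # xs)" using enat xs by simp
      finally show ?thesis by simp
    next
      case infinity
      then show ?thesis using xs by simp
    qed
  next
    case False
    have rest: "rest \<noteq> []" using False Cons.prems xs by auto
    have lastx: "last (a # xs) = last xs" using xs by simp
    have "min b (last xs) \<le> z \<and> z \<le> max b (last xs)"
      using False Cons.prems(3,4) lastx by (auto simp: min_def max_def split: if_splits)
    then have IH: "T b z \<omega> \<le> pc \<omega> xs" using Cons.IH Cons.prems(1) xs rest by (auto simp: Suc_le_eq)
    have "T a z \<omega> \<le> hit a b \<omega> + T b z \<omega>" by (rule T_prepend)
    also have "\<dots> \<le> hit a b \<omega> + pc \<omega> xs" using IH by (simp add: add_left_mono)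
    also have "\<dots> = pc \<omega> (a # xs)" using xs by simp
    finally show ?thesis by simp
  qed
qed

lemma T_mono:
  assumes om: "\<omega> \<in> Om" and y: "min 0 x \<le> y" "y \<le> max 0 x"
  shows "T 0 y \<omega> \<le> T 0 x \<omega>"
proof -
  obtain xs where xs: "xs \<in> PP 0 x" "T 0 x \<omega> = pc \<omega> xs" using T_ex by blast
  then show ?thesis using path_ivt[OF om, of xs y] y by (auto simp: PP_def)
qed


lemma B_mem: "x \<in> B t \<omega> \<longleftrightarrow> ereal_of_enat (T 0 x \<omega>) \<le> ereal t"
  by (simp add: B_def)

lemma B_zero: "0 \<le> t \<Longrightarrow> 0 \<in> B t \<omega>"
  by (simp add: B_mem T_refl zero_ereal_def)

lemma B_bound: "\<omega> \<in> Om \<Longrightarrow> x \<in> B t \<omega> \<Longrightarrow> real_of_int \<bar>x\<bar> \<le> t"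
proof -
  assume om: "\<omega> \<in> Om" and x: "x \<in> B t \<omega>"
  have "enat (nat \<bar>x - 0\<bar>) \<le> T 0 x \<omega>" by (rule T_dist[OF om])
  then have "ereal_of_enat (enat (nat \<bar>x\<bar>)) \<le> ereal_of_enat (T 0 x \<omega>)"
    by (simp only: ereal_of_enat_le_iff) simp
  also have "\<dots> \<le> ereal t" using x by (simp add: B_mem)
  finally show ?thesis by simp
qed

lemma B_finite: "\<omega> \<in> Om \<Longrightarrow> finite (B t \<omega>)"
proof -
  assume om: "\<omega> \<in> Om"
  have "B t \<omega> \<subseteq> {-\<lceil>t\<rceil>..\<lceil>t\<rceil>}"
  proof
    fix x assume "x \<in> B t \<omega>"
    then have "real_of_int \<bar>x\<bar> \<le> t" by (rule B_bound[OF om])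
    then have "\<bar>x\<bar> \<le> \<lceil>t\<rceil>" by linarith
    then show "x \<in> {-\<lceil>t\<rceil>..\<lceil>t\<rceil>}" by auto
  qed
  then show ?thesis by (rule finite_subset) simp
qed

lemma B_between: "\<omega> \<in> Om \<Longrightarrow> x \<in> B t \<omega> \<Longrightarrow> min 0 x \<le> y \<Longrightarrow> y \<le> max 0 x \<Longrightarrow> y \<in> B t \<omega>"
proof -
  assume om: "\<omega> \<in> Om" and x: "x \<in> B t \<omega>" and y: "min 0 x \<le> y" "y \<le> max 0 x"
  have "T 0 y \<omega> \<le> T 0 x \<omega>" using T_mono[OF om y] .
  then have "ereal_of_enat (T 0 y \<omega>) \<le> ereal_of_enat (T 0 x \<omega>)" by simp
  also have "\<dots> \<le> ereal t" using x by (simp add: B_mem)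
  finally show ?thesis by (simp add: B_mem)
qed

lemma B_walk: "y \<in> B s \<omega> \<Longrightarrow> s + real i \<le> t \<Longrightarrow> S y i \<omega> \<in> B t \<omega>"
proof -
  assume y: "y \<in> B s \<omega>" and st: "s + real i \<le> t"
  have "T 0 (S y i \<omega>) \<omega> \<le> T 0 y \<omega> + hit y (S y i \<omega>) \<omega>" by (rule T_append)
  also have "\<dots> \<le> T 0 y \<omega> + enat i" by (intro add_left_mono hit_le) simp
  finally have "ereal_of_enat (T 0 (S y i \<omega>) \<omega>) \<le> ereal_of_enat (T 0 y \<omega> + enat i)" by simp
  also have "\<dots> = ereal_of_enat (T 0 y \<omega>) + ereal (real i)" by (simp add: ereal_of_enat_add)
  also have "\<dots> \<le> ereal s + ereal (real i)" using y by (intro add_right_mono) (simp add: B_mem)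
  also have "\<dots> \<le> ereal t" using st by simp
  finally show ?thesis by (simp add: B_mem)
qed

lemma B_interval: "\<omega> \<in> Om \<Longrightarrow> x \<in> B t \<omega> \<Longrightarrow> y \<in> B t \<omega> \<Longrightarrow> {x..y} \<subseteq> B t \<omega>"
proof
  fix z assume om: "\<omega> \<in> Om" and x: "x \<in> B t \<omega>" and y: "y \<in> B t \<omega>" and z: "z \<in> {x..y}"
  show "z \<in> B t \<omega>"
  proof (cases "0 \<le> z")
    case True
    then show ?thesis using B_between[OF om y, of z] z by auto
  next
    case False
    then show ?thesis using B_between[OF om x, of z] z by auto
  qed
qed

lemma B_diam:
  assumes om: "\<omega> \<in> Om" and c: "real (card (B t \<omega>)) \<le> K" and x: "x \<in> B t \<omega>" and y: "y \<in> B t \<omega>"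
  shows "real_of_int \<bar>x - y\<bar> \<le> K - 1"
proof -
  have gen: "real_of_int (v - u) \<le> K - 1" if "u \<in> B t \<omega>" "v \<in> B t \<omega>" "u \<le> v" for u v
  proof -
    have "card {u..v} \<le> card (B t \<omega>)"
      using B_interval[OF om that(1,2)] B_finite[OF om] by (intro card_mono) auto
    then have "nat (v - u + 1) \<le> card (B t \<omega>)" by simp
    then have "real (nat (v - u + 1)) \<le> K" using c by linarith
    then show ?thesis using that(3) by simp
  qed
  show ?thesis
  proof (cases "x \<le> y")
    case True then show ?thesis using gen[OF x y] by simp
  next
    case False then show ?thesis using gen[OF y x] by simp
  qed
qed

lemma B_side:
  assumes om: "\<omega> \<in> Om" and m: "0 \<le> m" and c: "2 * m + 1 \<le> int (card (B t \<omega>))"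
  shows "{0..m} \<subseteq> B t \<omega> \<or> {-m..0} \<subseteq> B t \<omega>"
proof -
  have "\<exists>x\<in>B t \<omega>. m \<le> \<bar>x\<bar>"
  proof (rule ccontr)
    assume "\<not> ?thesis"
    then have "B t \<omega> \<subseteq> {-m+1..m-1}" by force
    then have "card (B t \<omega>) \<le> card {-m+1..m-1}" by (intro card_mono) auto
    then have "card (B t \<omega>) \<le> nat (2 * m - 1)" by simp
    then have "int (card (B t \<omega>)) \<le> int (nat (2 * m - 1))" by linarith
    then show False using c m by linarith
  qed
  then obtain x where x: "x \<in> B t \<omega>" "m \<le> \<bar>x\<bar>" by blast
  show ?thesis
  proof (cases "0 \<le> x")
    case True
    then have "{0..m} \<subseteq> B t \<omega>" using B_between[OF om x(1)] x(2) by auto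
    then show ?thesis ..
  next
    case False
    then have "{-m..0} \<subseteq> B t \<omega>" using B_between[OF om x(1)] x(2) by auto
    then show ?thesis ..
  qed
qed


abbreviation U :: "int pmf" where "U \<equiv> pmf_of_set {-1, 1}"

abbreviation MU :: "int measure" where "MU \<equiv> measure_pmf U"

lemma frog_PiM: "frog_space = PiM UNIV (\<lambda>_. MU)"
  by (simp add: frog_space_def)

interpretation FP: product_prob_space "\<lambda>_::int \<times> nat. MU" UNIV
  by unfold_locales

lemma space_frog[simp]: "space frog_space = UNIV"
  unfolding frog_space_def by (simp add: space_PiM)

lemma prob_space_frog: "prob_space frog_space"
  unfolding frog_PiM by (rule FP.P.prob_space_axioms)

interpretation F: prob_space frog_space
  by (rule prob_space_frog)

lemma set_pmf_U[simp]: "set_pmf U = {-1, 1}"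
  by (simp add: set_pmf_of_set)

lemma pmf_U: "v \<in> {-1, 1} \<Longrightarrow> pmf U v = 1/2"
  by (auto simp: pmf_of_set)

lemma space_PiM_MU[simp]: "space (PiM K (\<lambda>_. MU)) = PiE K (\<lambda>_. UNIV)"
  by (simp add: space_PiM)

lemma PSETS:
  assumes K: "finite K"
  shows "A \<subseteq> space (PiM K (\<lambda>_. MU)) \<Longrightarrow> A \<in> sets (PiM K (\<lambda>_. MU))"
proof -
  assume A: "A \<subseteq> space (PiM K (\<lambda>_. MU))"
  have cnt: "countable (PiE K (\<lambda>_. UNIV :: int set))"
    using K by (intro countable_PiE) auto
  have eq: "A = (\<Union>g\<in>A. PiE K (\<lambda>i. {g i}))"
  proof
    show "A \<subseteq> (\<Union>g\<in>A. PiE K (\<lambda>i. {g i}))"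
    proof
      fix g assume g: "g \<in> A"
      then have "g \<in> PiE K (\<lambda>i. {g i})" using A by (auto simp: PiE_iff)
      with g show "g \<in> (\<Union>g\<in>A. PiE K (\<lambda>i. {g i}))" by blast
    qed
  next
    show "(\<Union>g\<in>A. PiE K (\<lambda>i. {g i})) \<subseteq> A"
    proof clarify
      fix g h assume g: "g \<in> A" and h: "h \<in> PiE K (\<lambda>i. {g i})"
      have "g \<in> PiE K (\<lambda>_. UNIV)" using g A by auto
      then have "h = g" using h by (auto simp: PiE_iff extensional_def fun_eq_iff)
      then show "h \<in> A" using g by simp
    qed
  qed
  have "(\<Union>g\<in>A. PiE K (\<lambda>i. {g i})) \<in> sets (PiM K (\<lambda>_. MU))"
    using K A cnt by (intro sets.countable_UN' countable_subset[OF _ cnt]) (auto intro!: sets_PiM_I_finite)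
  with eq show ?thesis by simp
qed

lemma FC:
  assumes K: "finite K"
  shows "{\<omega> \<in> space frog_space. Q (restrict \<omega> K)} \<in> sets frog_space"
proof -
  let ?A = "{g \<in> space (PiM K (\<lambda>_. MU)). Q g}"
  have A: "?A \<in> sets (PiM K (\<lambda>_. MU))" using PSETS[OF K] by auto
  have m: "(\<lambda>\<omega>. restrict \<omega> K) \<in> measurable frog_space (PiM K (\<lambda>_. MU))"
    unfolding frog_PiM by (rule measurable_restrict_subset) simp
  have "(\<lambda>\<omega>. restrict \<omega> K) -` ?A \<inter> space frog_space \<in> sets frog_space"
    using measurable_sets[OF m A] .
  moreover have "(\<lambda>\<omega>. restrict \<omega> K) -` ?A \<inter> space frog_space = {\<omega> \<in> space frog_space. Q (restrict \<omega> K)}"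
    by auto
  ultimately show ?thesis by simp
qed

lemma coord_sets: "{\<omega> \<in> space frog_space. P (\<omega> i)} \<in> sets frog_space"
proof -
  have "{\<omega> \<in> space frog_space. P (\<omega> i)} = {\<omega> \<in> space frog_space. P (restrict \<omega> {i} i)}" by simp
  also have "\<dots> \<in> sets frog_space" by (rule FC) simp
  finally show ?thesis .
qed

lemma Om_sets: "Om \<in> sets frog_space"
proof -
  have "Om = (\<Inter>i\<in>UNIV. {\<omega> \<in> space frog_space. \<omega> i \<in> {-1, 1}})" by (auto simp: Om_def)
  also have "\<dots> \<in> sets frog_space"
    by (intro sets.countable_INT' image_subsetI coord_sets) auto
  finally show ?thesis .
qed

lemma AE_Om: "AE \<omega> in frog_space. \<omega> \<in> Om"
proof -
  have "\<forall>i. AE \<omega> in frog_space. \<omega> i \<in> {-1, 1}"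
  proof
    fix i :: "int \<times> nat"
    have "AE v in MU. v \<in> {-1, 1}" by (simp add: AE_measure_pmf_iff)
    then show "AE \<omega> in frog_space. \<omega> i \<in> {-1, 1}"
      unfolding frog_PiM by (rule FP.AE_component[rotated]) simp
  qed
  then have "AE \<omega> in frog_space. \<forall>i. \<omega> i \<in> {-1, 1}" by (simp add: AE_all_countable)
  then show ?thesis by (simp add: Om_def)
qed

lemma measure_Om_le:
  assumes "E \<in> sets frog_space"
  shows "measure frog_space E \<le> measure frog_space (E \<inter> Om)"
proof (rule F.finite_measure_mono_AE)
  show "AE x\<in>E in frog_space. x \<in> E \<inter> Om" using AE_Om by eventually_elim auto
  show "E \<inter> Om \<in> sets frog_space" using assms Om_sets by auto
qed

abbreviation PJ :: "(int \<times> nat) set \<Rightarrow> ((int \<times> nat) \<Rightarrow> int) set" where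
  "PJ J \<equiv> PiE J (\<lambda>_. {-1, 1})"

lemma card_PJ: "finite J \<Longrightarrow> card (PJ J) = 2 ^ card J"
  by (simp add: card_PiE numeral_2_eq_2)

lemma finite_PJ: "finite J \<Longrightarrow> finite (PJ J)"
  by (simp add: finite_PiE)

lemma measure_cyl:
  assumes J: "finite J" and f: "f \<in> PJ J"
  shows "measure frog_space {\<omega> \<in> space frog_space. \<forall>i\<in>J. \<omega> i = f i} = (1/2) ^ card J"
proof -
  have "{\<omega> \<in> space frog_space. \<forall>i\<in>J. \<omega> i = f i} = {\<omega> \<in> space (PiM UNIV (\<lambda>_. MU)). \<forall>i\<in>J. \<omega> i \<in> {f i}}"
    by (simp add: frog_PiM[symmetric])
  moreover have "emeasure (PiM UNIV (\<lambda>_. MU)) {\<omega> \<in> space (PiM UNIV (\<lambda>_. MU)). \<forall>i\<in>J. \<omega> i \<in> {f i}} = (\<Prod>i\<in>J. emeasure MU {f i})"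
    by (rule FP.emeasure_PiM_Collect) (use J in auto)
  ultimately have "emeasure frog_space {\<omega> \<in> space frog_space. \<forall>i\<in>J. \<omega> i = f i} = (\<Prod>i\<in>J. emeasure MU {f i})"
    by (simp add: frog_PiM[symmetric])
  also have "\<dots> = (\<Prod>i\<in>J. ennreal (1/2))"
    using f by (intro prod.cong refl) (auto simp: emeasure_pmf_single pmf_U PiE_iff)
  also have "\<dots> = ennreal ((1/2) ^ card J)"
    by (subst prod_constant, subst ennreal_power) auto
  finally show ?thesis by (simp add: F.emeasure_eq_measure)
qed

lemma bridge:
  assumes J: "finite J"
  shows "measure frog_space {\<omega> \<in> space frog_space. Q (restrict \<omega> J)} = card {f \<in> PJ J. Q f} / 2 ^ card J"
proof -
  let ?E = "{\<omega> \<in> space frog_space. Q (restrict \<omega> J)}"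
  let ?G = "{f \<in> PJ J. Q f}"
  let ?C = "\<lambda>f. {\<omega> \<in> space frog_space. \<forall>i\<in>J. \<omega> i = f i}"
  have finG: "finite ?G" using finite_PJ[OF J] by simp
  have Csets: "?C f \<in> sets frog_space" for f
  proof -
    have "?C f = {\<omega> \<in> space frog_space. (\<lambda>g. \<forall>i\<in>J. g i = f i) (restrict \<omega> J)}" by auto
    also have "\<dots> \<in> sets frog_space" by (rule FC[OF J])
    finally show ?thesis .
  qed
  have Esets: "?E \<in> sets frog_space" by (rule FC[OF J])
  have Usets: "(\<Union>f\<in>?G. ?C f) \<in> sets frog_space"
    using finG Csets by (intro sets.finite_UN) auto
  have sub: "(\<Union>f\<in>?G. ?C f) \<subseteq> ?E"
  proof
    fix \<omega> assume "\<omega> \<in> (\<Union>f\<in>?G. ?C f)"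
    then obtain f where f: "f \<in> PJ J" "Q f" and w: "\<forall>i\<in>J. \<omega> i = f i" by auto
    have "restrict \<omega> J = f" using f w by (auto simp: PiE_iff extensional_def fun_eq_iff)
    then show "\<omega> \<in> ?E" using f by simp
  qed
  have ae: "AE \<omega>\<in>?E in frog_space. \<omega> \<in> (\<Union>f\<in>?G. ?C f)"
    using AE_Om
  proof eventually_elim
    case (elim \<omega>)
    show ?case
    proof
      assume w: "\<omega> \<in> ?E"
      have "restrict \<omega> J \<in> ?G" using w elim by (auto simp: Om_def)
      moreover have "\<omega> \<in> ?C (restrict \<omega> J)" by simp
      ultimately show "\<omega> \<in> (\<Union>f\<in>?G. ?C f)" by blast
    qed
  qed
  have "measure frog_space ?E = measure frog_space (\<Union>f\<in>?G. ?C f)"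
    using F.finite_measure_mono_AE[OF ae Usets] F.finite_measure_mono[OF sub Esets] by linarith
  also have "\<dots> = (\<Sum>f\<in>?G. measure frog_space (?C f))"
  proof (rule F.finite_measure_finite_Union[OF finG])
    show "?C ` ?G \<subseteq> sets frog_space" using Csets by auto
    show "disjoint_family_on ?C ?G"
      unfolding disjoint_family_on_def
    proof (intro ballI impI)
      fix f g assume f: "f \<in> ?G" and g: "g \<in> ?G" and ne: "f \<noteq> g"
      show "?C f \<inter> ?C g = {}"
      proof (rule ccontr)
        assume "?C f \<inter> ?C g \<noteq> {}"
        then obtain \<omega> where wf: "\<forall>i\<in>J. \<omega> i = f i" and wg: "\<forall>i\<in>J. \<omega> i = g i" by auto
        have "f = g" using wf wg f g by (intro PiE_ext[of f J "\<lambda>_. {-1,1}" g]) auto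
        with ne show False by simp
      qed
    qed
  qed
  also have "\<dots> = (\<Sum>f\<in>?G. (1/2) ^ card J)"
    using J by (intro sum.cong refl measure_cyl) auto
  also have "\<dots> = card ?G / 2 ^ card J" by (simp add: field_simps)
  finally show ?thesis .
qed


abbreviation SJ :: "(int \<times> nat) set \<Rightarrow> ((int \<times> nat) \<Rightarrow> int) \<Rightarrow> real" where
  "SJ J f \<equiv> (\<Sum>i\<in>J. real_of_int (f i))"

lemma upd_inj:
  assumes x: "x \<notin> J"
  shows "inj_on (\<lambda>(y::int, g::(int \<times> nat) \<Rightarrow> int). g(x := y)) ({-1, 1} \<times> PJ J)"
proof (rule inj_onI)
  fix p q assume p: "p \<in> {-1, 1} \<times> PJ J" and q: "q \<in> {-1, 1} \<times> PJ J"
    and e0: "(\<lambda>(y::int, g::(int \<times> nat) \<Rightarrow> int). g(x := y)) p = (\<lambda>(y::int, g::(int \<times> nat) \<Rightarrow> int). g(x := y)) q"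
  obtain y g where pe: "p = (y, g)" by (cases p)
  obtain y' g' where qe: "q = (y', g')" by (cases q)
  have g: "g \<in> PJ J" using p pe by simp
  have g': "g' \<in> PJ J" using q qe by simp
  have e: "g(x := y) = g'(x := y')" using e0 pe qe by simp
  have "y = y'" using fun_cong[OF e, of x] by simp
  moreover have "g = g'"
  proof
    fix i show "g i = g' i"
    proof (cases "i = x")
      case True then show ?thesis using PiE_arb[OF g x] PiE_arb[OF g' x] by simp
    next
      case False then show ?thesis using fun_cong[OF e, of i] False by (simp only: fun_upd_other)
    qed
  qed
  ultimately show "p = q" using pe qe by simp
qed

lemma PJ_insert_eq: "PJ (insert x J) = (\<lambda>(y::int, g::(int \<times> nat) \<Rightarrow> int). g(x := y)) ` ({-1, 1} \<times> PJ J)"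
  by (fact PiE_insert_eq[of x J "\<lambda>_. {-1::int, 1}"])

lemma PJ_insert_sum:
  fixes h :: "real \<Rightarrow> real"
  assumes J: "finite J" and x: "x \<notin> J"
  shows "(\<Sum>f\<in>PJ (insert x J). h (SJ (insert x J) f)) = (\<Sum>f\<in>PJ J. h (SJ J f + 1) + h (SJ J f - 1))"
proof -
  let ?u = "\<lambda>(y::int, g::(int \<times> nat) \<Rightarrow> int). g(x := y)"
  have sumS: "SJ (insert x J) (g(x := y)) = real_of_int y + SJ J g" for g y
  proof -
    have "SJ (insert x J) (g(x := y)) = real_of_int y + SJ J (g(x := y))"
      using J x by (simp add: sum.insert)
    also have "SJ J (g(x := y)) = SJ J g" using x by (intro sum.cong) auto
    finally show ?thesis .
  qed
  have "(\<Sum>f\<in>PJ (insert x J). h (SJ (insert x J) f)) = (\<Sum>p\<in>{-1, 1} \<times> PJ J. h (SJ (insert x J) (?u p)))"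
    unfolding PJ_insert_eq by (rule sum.reindex[OF upd_inj[OF x], unfolded comp_def])
  also have "\<dots> = (\<Sum>y\<in>{-1::int, 1}. \<Sum>g\<in>PJ J. h (SJ (insert x J) (g(x := y))))"
    by (subst sum.cartesian_product) (simp add: case_prod_beta)
  also have "\<dots> = (\<Sum>y\<in>{-1::int, 1}. \<Sum>g\<in>PJ J. h (real_of_int y + SJ J g))"
    by (simp only: sumS)
  also have "\<dots> = (\<Sum>g\<in>PJ J. h (SJ J g + 1) + h (SJ J g - 1))"
    by (simp add: sum.distrib add.commute)
  finally show ?thesis .
qed


lemma mom2: "finite J \<Longrightarrow> (\<Sum>f\<in>PJ J. (SJ J f)^2) = real (card J) * 2 ^ card J"
proof (induction J rule: finite_induct)
  case empty then show ?case by simp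
next
  case (insert x J)
  have "(\<Sum>f\<in>PJ (insert x J). (SJ (insert x J) f)^2) = (\<Sum>f\<in>PJ J. (SJ J f + 1)^2 + (SJ J f - 1)^2)"
    by (rule PJ_insert_sum[OF insert(1,2)])
  also have "\<dots> = (\<Sum>f\<in>PJ J. 2 * (SJ J f)^2 + 2)"
    by (intro sum.cong refl) (simp add: power2_eq_square algebra_simps)
  also have "\<dots> = 2 * (\<Sum>f\<in>PJ J. (SJ J f)^2) + 2 * real (card (PJ J))"
    by (simp add: sum.distrib sum_distrib_left)
  also have "\<dots> = real (card (insert x J)) * 2 ^ card (insert x J)"
    using insert by (simp add: card_PJ algebra_simps)
  finally show ?case .
qed

lemma mom4: "finite J \<Longrightarrow> (\<Sum>f\<in>PJ J. (SJ J f)^4) = (3 * real (card J)^2 - 2 * real (card J)) * 2 ^ card J"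
proof (induction J rule: finite_induct)
  case empty then show ?case by simp
next
  case (insert x J)
  have "(\<Sum>f\<in>PJ (insert x J). (SJ (insert x J) f)^4) = (\<Sum>f\<in>PJ J. (SJ J f + 1)^4 + (SJ J f - 1)^4)"
    by (rule PJ_insert_sum[OF insert(1,2)])
  also have "\<dots> = (\<Sum>f\<in>PJ J. 2 * (SJ J f)^4 + 12 * (SJ J f)^2 + 2)"
    by (intro sum.cong refl) (simp add: power4_eq_xxxx power2_eq_square algebra_simps)
  also have "\<dots> = 2 * (\<Sum>f\<in>PJ J. (SJ J f)^4) + 12 * (\<Sum>f\<in>PJ J. (SJ J f)^2) + 2 * real (card (PJ J))"
    by (simp add: sum.distrib sum_distrib_left)
  also have "\<dots> = (3 * real (card (insert x J))^2 - 2 * real (card (insert x J))) * 2 ^ card (insert x J)"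
    unfolding insert.IH mom2[OF insert(1)] using insert by (simp add: card_PJ power2_eq_square algebra_simps)
  finally show ?case .
qed


lemma pointwise_ineq:
  fixes s a l :: real
  assumes l: "l > 0" and a: "0 \<le> a"
  shows "s^2 \<le> a^2 + (l * s^4 + (if \<bar>s\<bar> \<le> a then 0 else 1) / l) / 2"
proof (cases "\<bar>s\<bar> \<le> a")
  case True
  then have "s^2 \<le> a^2" by (metis abs_le_square_iff abs_of_nonneg a)
  moreover have "0 \<le> l * s^4" using l by simp
  ultimately show ?thesis using True by simp
next
  case False
  have "0 \<le> (l * s^2 - 1)^2 / l" using l by simp
  also have "(l * s^2 - 1)^2 / l = l * s^4 - 2 * s^2 + 1 / l"
    using l by (simp add: field_simps power2_eq_square power4_eq_xxxx)
  finally have "2 * s^2 \<le> l * s^4 + 1 / l" by simp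
  then have h1: "s^2 \<le> (l * s^4 + 1 / l) / 2" by (simp add: le_divide_eq mult.commute)
  have h2: "(if \<bar>s\<bar> \<le> a then 0 else 1) / l = 1 / l" using False by simp
  show ?thesis unfolding h2 using h1 zero_le_power2[of a] by linarith
qed

lemma anti_count:
  assumes J: "finite J" and M: "card J = M" "M > 0" and a: "0 \<le> a" "a^2 \<le> 3 * real M / 4"
  shows "real (card {f \<in> PJ J. \<bar>SJ J f\<bar> \<le> a}) \<le> 47/48 * 2 ^ M"
proof -
  define l :: real where "l = 1 / (12 * real M)"
  have l: "l > 0" using M by (simp add: l_def)
  define X :: real where "X = 2 ^ M"
  define N :: real where "N = real (card {f \<in> PJ J. \<bar>SJ J f\<bar> \<le> a})"
  have cardP: "real (card (PJ J)) = X" using J M by (simp add: card_PJ X_def)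
  have finP: "finite (PJ J)" using J by (rule finite_PJ)
  have ind: "(\<Sum>f\<in>PJ J. (if \<bar>SJ J f\<bar> \<le> a then 0 else 1 :: real)) = X - N"
  proof -
    have "(\<Sum>f\<in>PJ J. (if \<bar>SJ J f\<bar> \<le> a then 1 else 0 :: real)) = N"
      unfolding N_def using finP by (simp add: sum.If_cases Collect_conj_eq Int_commute)
    moreover have "(\<Sum>f\<in>PJ J. (if \<bar>SJ J f\<bar> \<le> a then 0 else 1 :: real)) + (\<Sum>f\<in>PJ J. (if \<bar>SJ J f\<bar> \<le> a then 1 else 0 :: real)) = X"
      by (subst sum.distrib[symmetric]) (simp add: cardP[symmetric] if_distrib cong: if_cong)
    ultimately show ?thesis by linarith
  qed
  have "real M * X = (\<Sum>f\<in>PJ J. (SJ J f)^2)" using mom2[OF J] M by (simp add: X_def)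
  also have "\<dots> \<le> (\<Sum>f\<in>PJ J. a^2 + (l * (SJ J f)^4 + (if \<bar>SJ J f\<bar> \<le> a then 0 else 1) / l) / 2)"
    by (intro sum_mono pointwise_ineq l a)
  also have "\<dots> = (\<Sum>f\<in>PJ J. a^2 + l / 2 * (SJ J f)^4 + (if \<bar>SJ J f\<bar> \<le> a then 0 else 1) / (2 * l))"
    by (intro sum.cong refl) (simp add: add_divide_distrib)
  also have "\<dots> = a^2 * X + l / 2 * (\<Sum>f\<in>PJ J. (SJ J f)^4) + (\<Sum>f\<in>PJ J. (if \<bar>SJ J f\<bar> \<le> a then 0 else 1)) / (2 * l)"
    by (simp only: sum.distrib sum_distrib_left[symmetric] sum_divide_distrib[symmetric] sum_constant cardP) simp
  also have "\<dots> = a^2 * X + l / 2 * ((3 * real M^2 - 2 * real M) * X) + (X - N) / (2 * l)"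
    using mom4[OF J] M by (simp add: ind X_def)
  finally have ineq: "real M * X \<le> a^2 * X + l / 2 * ((3 * real M^2 - 2 * real M) * X) + (X - N) / (2 * l)" .
  have X: "X > 0" by (simp add: X_def)
  have Mp: "real M > 0" using M by simp
  have t1: "a^2 * X \<le> 3 * real M / 4 * X" using a X by (intro mult_right_mono) auto
  have t2: "l / 2 * ((3 * real M^2 - 2 * real M) * X) \<le> real M / 8 * X"
  proof -
    have "l / 2 * ((3 * real M^2 - 2 * real M) * X) = (3 * real M - 2) / 24 * X"
      using Mp by (simp add: l_def field_simps power2_eq_square)
    also have "\<dots> \<le> real M / 8 * X" using X by (intro mult_right_mono) auto
    finally show ?thesis .
  qed
  have t3: "(X - N) / (2 * l) = 6 * real M * (X - N)" using Mp by (simp add: l_def field_simps)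
  have "real M * (X / 8) \<le> real M * (6 * (X - N))"
    using ineq t1 t2 t3 by (simp add: algebra_simps)
  then have "X / 8 \<le> 6 * (X - N)" using Mp by simp
  then have "N \<le> 47/48 * X" by simp
  then show ?thesis by (simp add: N_def X_def)
qed

lemma anti_prob:
  assumes J: "finite J" and M: "card J = M" "M > 0" and a: "0 \<le> a" "a^2 \<le> 3 * real M / 4"
  shows "measure frog_space {\<omega> \<in> space frog_space. \<bar>SJ J \<omega>\<bar> \<le> a} \<le> 47/48"
proof -
  have "{\<omega> \<in> space frog_space. \<bar>SJ J \<omega>\<bar> \<le> a} = {\<omega> \<in> space frog_space. (\<lambda>g. \<bar>SJ J g\<bar> \<le> a) (restrict \<omega> J)}"
    by (simp cong: sum.cong)
  also have "measure frog_space \<dots> = real (card {f \<in> PJ J. \<bar>SJ J f\<bar> \<le> a}) / 2 ^ card J"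
    by (rule bridge[OF J])
  also have "\<dots> \<le> 47/48"
    using anti_count[OF J M a] M by (simp add: pos_divide_le_eq)
  finally show ?thesis .
qed


lemma indep_coords: "F.indep_vars (\<lambda>_. MU) (\<lambda>i \<omega>. \<omega> i) UNIV"
proof (subst F.indep_vars_iff_distr_eq_PiM)
  show "UNIV \<noteq> {}" by simp
  show "(\<lambda>\<omega>. \<omega> i) \<in> measurable frog_space MU" for i :: "int \<times> nat"
    unfolding frog_space_def by (rule measurable_component_singleton) simp
  have d: "distr frog_space MU (\<lambda>\<omega>. \<omega> i) = MU" for i :: "int \<times> nat"
    unfolding frog_PiM by (rule FP.PiM_component) simp
  show "distr frog_space (PiM UNIV (\<lambda>_. MU)) (\<lambda>x. restrict (\<lambda>i. x i) UNIV) =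
        PiM UNIV (\<lambda>i. distr frog_space MU (\<lambda>\<omega>. \<omega> i))"
    unfolding d restrict_UNIV frog_PiM[symmetric] by (rule distr_id)
qed

lemma block_indep:
  assumes fin: "finite L" and ne: "L \<noteq> {}" and K: "\<And>j. finite (K j)"
    and disj: "disjoint_family_on K L"
    and A: "\<And>j. j \<in> L \<Longrightarrow> A j \<subseteq> space (PiM (K j) (\<lambda>_. MU))"
  shows "measure frog_space (\<Inter>j\<in>L. {\<omega> \<in> space frog_space. restrict \<omega> (K j) \<in> A j})
       = (\<Prod>j\<in>L. measure frog_space {\<omega> \<in> space frog_space. restrict \<omega> (K j) \<in> A j})"
proof -
  have ind: "F.indep_vars (\<lambda>j. PiM (K j) (\<lambda>_. MU)) (\<lambda>j \<omega>. restrict \<omega> (K j)) L"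
    using F.indep_vars_restrict[OF indep_coords, of L K] disj by simp
  have "measure frog_space (\<Inter>j\<in>L. (\<lambda>\<omega>. restrict \<omega> (K j)) -` A j \<inter> space frog_space)
      = (\<Prod>j\<in>L. measure frog_space ((\<lambda>\<omega>. restrict \<omega> (K j)) -` A j \<inter> space frog_space))"
    by (rule F.indep_varsD[OF ind ne fin subset_refl]) (rule PSETS[OF K A])
  moreover have "\<And>j. (\<lambda>\<omega>. restrict \<omega> (K j)) -` A j \<inter> space frog_space = {\<omega> \<in> space frog_space. restrict \<omega> (K j) \<in> A j}"
    by auto
  ultimately show ?thesis by simp
qed

lemma sum_blk: "(\<Sum>i\<in>{y} \<times> BB. f i) = (\<Sum>k\<in>BB. f (y, k))"
proof -
  have "{y} \<times> BB = (\<lambda>k. (y, k)) ` BB" by auto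
  moreover have "inj_on (\<lambda>k. (y, k)) BB" by (auto simp: inj_on_def)
  ultimately show ?thesis by (simp add: sum.reindex)
qed

lemma pow_exp: "(47/48 :: real) ^ n \<le> exp (- real n / 48)"
proof -
  have "(47/48 :: real) \<le> exp (- 1 / 48)" using exp_ge_add_one_self[of "-1/48"] by simp
  then have "(47/48 :: real) ^ n \<le> exp (- 1 / 48) ^ n" by (intro power_mono) auto
  also have "\<dots> = exp (- real n / 48)" by (subst exp_of_nat_mult[symmetric]) simp
  finally show ?thesis .
qed

lemma block_bound:
  assumes Y: "finite Y" and M: "M > 0" and a: "0 \<le> a" "a^2 \<le> 3 * real M / 4"
  shows "measure frog_space {\<omega> \<in> space frog_space. \<forall>y\<in>Y. \<forall>b<nb.
            \<bar>\<Sum>k\<in>{b*M..<(b+1)*M}. real_of_int (\<omega> (y, k))\<bar> \<le> a} \<le> exp (- real (card Y * nb) / 48)"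
proof (cases "Y = {} \<or> nb = 0")
  case True
  then show ?thesis using F.prob_le_1 by auto
next
  case False
  let ?L = "Y \<times> {..<nb}"
  let ?K = "\<lambda>(y, b). {y} \<times> {b*M..<(b+1)*M}"
  let ?A = "\<lambda>j. {g \<in> space (PiM (?K j) (\<lambda>_. MU)). \<bar>SJ (?K j) g\<bar> \<le> a}"
  have finL: "finite ?L" using Y by simp
  have neL: "?L \<noteq> {}" using False by auto
  have finK: "\<And>j. finite (?K j)" by auto
  have disj: "disjoint_family_on ?K ?L"
    unfolding disjoint_family_on_def
  proof (intro ballI impI)
    fix p q :: "int \<times> nat" assume "p \<in> ?L" "q \<in> ?L" and pq: "p \<noteq> q"
    obtain y b where p: "p = (y, b)" by (cases p)
    obtain y' b' where q: "q = (y', b')" by (cases q)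
    show "?K p \<inter> ?K q = {}"
    proof (rule ccontr)
      assume "?K p \<inter> ?K q \<noteq> {}"
      then obtain z where z1: "z \<in> ?K (y, b)" and z2: "z \<in> ?K (y', b')"
        using p q by blast
      obtain i k where zz: "z = (i, k)" by (cases z)
      have i1: "(i, k) \<in> ?K (y, b)" and i2: "(i, k) \<in> ?K (y', b')" using z1 z2 zz by auto
      have "y = y'" using i1 i2 by auto
      then have bb: "b \<noteq> b'" using pq p q by auto
      have k: "b * M \<le> k" "k < (b+1)*M" "b' * M \<le> k" "k < (b'+1)*M" using i1 i2 by auto
      show False
      proof (cases "b < b'")
        case True
        then have "(b+1) * M \<le> b' * M" by (intro mult_right_mono) auto
        with k show False by simp
      next
        case False
        with bb have "(b'+1) * M \<le> b * M" by (intro mult_right_mono) auto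
        with k show False by simp
      qed
    qed
  qed
  have ev: "{\<omega> \<in> space frog_space. \<forall>y\<in>Y. \<forall>b<nb. \<bar>\<Sum>k\<in>{b*M..<(b+1)*M}. real_of_int (\<omega> (y, k))\<bar> \<le> a}
      = (\<Inter>j\<in>?L. {\<omega> \<in> space frog_space. restrict \<omega> (?K j) \<in> ?A j})"
  proof -
    have "\<And>\<omega> y b. SJ (?K (y, b)) (restrict \<omega> (?K (y, b))) = (\<Sum>k\<in>{b*M..<(b+1)*M}. real_of_int (\<omega> (y, k)))"
      by (simp add: sum_blk)
    then show ?thesis using neL by (auto simp: PiE_iff)
  qed
  have "measure frog_space (\<Inter>j\<in>?L. {\<omega> \<in> space frog_space. restrict \<omega> (?K j) \<in> ?A j})
      = (\<Prod>j\<in>?L. measure frog_space {\<omega> \<in> space frog_space. restrict \<omega> (?K j) \<in> ?A j})"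
    by (rule block_indep[OF finL neL finK disj]) auto
  also have "\<dots> \<le> (\<Prod>j\<in>?L. 47/48)"
  proof (rule prod_mono)
    fix j assume "j \<in> ?L"
    obtain y b where j: "j = (y, b)" by (cases j)
    have eq: "{\<omega> \<in> space frog_space. restrict \<omega> (?K j) \<in> ?A j} = {\<omega> \<in> space frog_space. \<bar>SJ (?K j) \<omega>\<bar> \<le> a}"
      by auto
    have c: "card (?K j) = M" using j by (simp add: card_cartesian_product_singleton)
    show "0 \<le> measure frog_space {\<omega> \<in> space frog_space. restrict \<omega> (?K j) \<in> ?A j} \<and>
          measure frog_space {\<omega> \<in> space frog_space. restrict \<omega> (?K j) \<in> ?A j} \<le> 47/48"
      unfolding eq using anti_prob[OF finK c M a] by simp
  qed
  also have "\<dots> = (47/48) ^ card ?L" by simp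
  also have "\<dots> \<le> exp (- real (card ?L) / 48)" by (rule pow_exp)
  finally have fin: "measure frog_space (\<Inter>j\<in>?L. {\<omega> \<in> space frog_space. restrict \<omega> (?K j) \<in> ?A j})
      \<le> exp (- real (card ?L) / 48)" .
  have cl: "card ?L = card Y * nb" by (simp add: card_cartesian_product)
  show ?thesis unfolding ev cl[symmetric] by (rule fin)
qed


lemma UNIV_frog[simp]: "UNIV \<in> sets frog_space"
  using sets.top[of frog_space] by simp

lemma hit_eq_iff: "hit a b \<omega> = enat i \<longleftrightarrow> S a i \<omega> = b \<and> (\<forall>k<i. S a k \<omega> \<noteq> b)"
proof
  assume h: "hit a b \<omega> = enat i"
  have "S a i \<omega> = b" by (rule hit_enat[OF h])
  moreover have "\<forall>k<i. S a k \<omega> \<noteq> b"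
  proof (intro allI impI notI)
    fix k assume "k < i" "S a k \<omega> = b"
    then have "hit a b \<omega> \<le> enat k" by (intro hit_le)
    with h \<open>k < i\<close> show False by simp
  qed
  ultimately show "S a i \<omega> = b \<and> (\<forall>k<i. S a k \<omega> \<noteq> b)" ..
next
  assume h: "S a i \<omega> = b \<and> (\<forall>k<i. S a k \<omega> \<noteq> b)"
  then have "(LEAST n. S a n \<omega> = b) = i"
    by (intro Least_equality) (auto simp: not_less[symmetric])
  then show "hit a b \<omega> = enat i" using h unfolding hit_def by auto
qed

lemma hit_sets: "{\<omega> \<in> space frog_space. hit a b \<omega> = enat i} \<in> sets frog_space"
proof -
  let ?K = "{a} \<times> {..<i}"
  let ?Q = "\<lambda>g. a + (\<Sum>j<i. g (a, j)) = b \<and> (\<forall>k<i. a + (\<Sum>j<k. g (a, j)) \<noteq> b)"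
  have "\<And>\<omega> k. k \<le> i \<Longrightarrow> (\<Sum>j<k. restrict \<omega> ?K (a, j)) = (\<Sum>j<k. \<omega> (a, j))"
    by (intro sum.cong) auto
  then have "{\<omega> \<in> space frog_space. hit a b \<omega> = enat i} = {\<omega> \<in> space frog_space. ?Q (restrict \<omega> ?K)}"
    by (auto simp: hit_eq_iff S_def)
  also have "\<dots> \<in> sets frog_space" by (rule FC) simp
  finally show ?thesis .
qed

lemma enat_add_le_iff:
  "x + y \<le> enat m \<longleftrightarrow> (\<exists>i\<le>m. x = enat i \<and> y \<le> enat (m - i))"
proof (cases x)
  case (enat a)
  show ?thesis
  proof (cases y)
    case (enat c)
    then show ?thesis using \<open>x = enat a\<close> by auto
  qed (use enat in auto)
qed simp

lemma pc_sets: "{\<omega> \<in> space frog_space. pc \<omega> xs \<le> enat m} \<in> sets frog_space"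
proof (induction xs arbitrary: m rule: induct_list012)
  case 1 then show ?case by (simp add: zero_enat_def)
next
  case (2 x) then show ?case by (simp add: zero_enat_def)
next
  case (3 a b rest)
  have "{\<omega> \<in> space frog_space. pc \<omega> (a # b # rest) \<le> enat m}
      = (\<Union>i\<in>{..m}. {\<omega> \<in> space frog_space. hit a b \<omega> = enat i} \<inter> {\<omega> \<in> space frog_space. pc \<omega> (b # rest) \<le> enat (m - i)})"
    by (auto simp: enat_add_le_iff)
  also have "\<dots> \<in> sets frog_space"
    using 3(2) hit_sets by (intro sets.finite_UN sets.Int) auto
  finally show ?case .
qed

lemma T_sets: "{\<omega> \<in> space frog_space. T x y \<omega> \<le> enat m} \<in> sets frog_space"
proof -
  have "{\<omega> \<in> space frog_space. T x y \<omega> \<le> enat m} = (\<Union>xs\<in>PP x y. {\<omega> \<in> space frog_space. pc \<omega> xs \<le> enat m})"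
  proof (intro set_eqI iffI)
    fix \<omega> assume "\<omega> \<in> {\<omega> \<in> space frog_space. T x y \<omega> \<le> enat m}"
    moreover obtain xs where "xs \<in> PP x y" "T x y \<omega> = pc \<omega> xs" using T_ex by blast
    ultimately show "\<omega> \<in> (\<Union>xs\<in>PP x y. {\<omega> \<in> space frog_space. pc \<omega> xs \<le> enat m})" by auto
  next
    fix \<omega> assume "\<omega> \<in> (\<Union>xs\<in>PP x y. {\<omega> \<in> space frog_space. pc \<omega> xs \<le> enat m})"
    then obtain xs where "xs \<in> PP x y" "pc \<omega> xs \<le> enat m" by auto
    then show "\<omega> \<in> {\<omega> \<in> space frog_space. T x y \<omega> \<le> enat m}" using T_le[of xs x y \<omega>] by auto
  qed
  also have "\<dots> \<in> sets frog_space"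
    by (intro sets.countable_UN' countableI_type) (use pc_sets in auto)
  finally show ?thesis .
qed

lemma ereal_le_iff: "ereal_of_enat e \<le> ereal t \<longleftrightarrow> (0 \<le> t \<and> e \<le> enat (nat \<lfloor>t\<rfloor>))"
proof (cases e)
  case (enat k)
  have "real k \<le> t \<longleftrightarrow> (0 \<le> t \<and> k \<le> nat \<lfloor>t\<rfloor>)" by linarith
  then show ?thesis using enat by simp
qed simp

lemma ereal_less_iff: "ereal_of_enat e < ereal s \<longleftrightarrow> (\<exists>j. real j < s \<and> e \<le> enat j)"
proof (cases e)
  case (enat k)
  have "real k < s \<longleftrightarrow> (\<exists>j. real j < s \<and> k \<le> j)"
  proof
    assume "real k < s" then show "\<exists>j. real j < s \<and> k \<le> j" by blast
  next
    assume "\<exists>j. real j < s \<and> k \<le> j"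
    then obtain j where "real j < s" "k \<le> j" by blast
    then show "real k < s" by linarith
  qed
  then show ?thesis using enat by simp
qed simp

lemma Bmem_sets: "{\<omega> \<in> space frog_space. x \<in> B t \<omega>} \<in> sets frog_space"
proof (cases "0 \<le> t")
  case True
  then show ?thesis using T_sets[of 0 x "nat \<lfloor>t\<rfloor>"] by (simp add: B_mem ereal_le_iff)
next
  case False
  then show ?thesis by (simp add: B_mem ereal_le_iff)
qed

lemma Beq_sets: "{\<omega> \<in> space frog_space. B t \<omega> = SS} \<in> sets frog_space"
proof -
  have "{\<omega> \<in> space frog_space. B t \<omega> = SS} = (\<Inter>x\<in>UNIV. {\<omega> \<in> space frog_space. x \<in> B t \<omega> \<longleftrightarrow> x \<in> SS})"
    by auto
  also have "\<dots> \<in> sets frog_space"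
  proof (intro sets.countable_INT' countableI_type image_subsetI)
    fix x :: int
    show "{\<omega> \<in> space frog_space. x \<in> B t \<omega> \<longleftrightarrow> x \<in> SS} \<in> sets frog_space"
    proof (cases "x \<in> SS")
      case True then show ?thesis using Bmem_sets[of x t] by simp
    next
      case False
      then have "{\<omega> \<in> space frog_space. x \<in> B t \<omega> \<longleftrightarrow> x \<in> SS} = space frog_space - {\<omega> \<in> space frog_space. x \<in> B t \<omega>}"
        by auto
      then show ?thesis by (simp only:) (rule sets.compl_sets[OF Bmem_sets])
    qed
  qed simp
  finally show ?thesis .
qed

lemma or_cancel: "P \<or> Q \<Longrightarrow> \<not> P \<Longrightarrow> Q" by blast

lemma card_sets: "{\<omega> \<in> space frog_space. real (card (B t \<omega>)) \<le> K} \<in> sets frog_space"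
proof -
  let ?FS = "{SS :: int set. finite SS}"
  let ?Fin = "(\<Union>SS\<in>?FS. {\<omega> \<in> space frog_space. B t \<omega> = SS})"
  have Fin: "?Fin \<in> sets frog_space"
    by (intro sets.countable_UN' countable_Collect_finite) (use Beq_sets in auto)
  have "{\<omega> \<in> space frog_space. real (card (B t \<omega>)) \<le> K}
      = (\<Union>SS\<in>{SS. finite SS \<and> real (card SS) \<le> K}. {\<omega> \<in> space frog_space. B t \<omega> = SS})
        \<union> (if 0 \<le> K then space frog_space - ?Fin else {})" (is "?L = ?R1 \<union> ?R2")
  proof (intro set_eqI iffI)
    fix \<omega> assume w: "\<omega> \<in> ?L"
    show "\<omega> \<in> ?R1 \<union> ?R2"
    proof (cases "finite (B t \<omega>)")
      case True
      have "B t \<omega> \<in> {SS. finite SS \<and> real (card SS) \<le> K}" using True w by simp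
      then have "\<omega> \<in> ?R1" by (rule UN_I) simp
      then show ?thesis by (rule UnI1)
    next
      case False
      then have "0 \<le> K" using w by simp
      moreover have "\<omega> \<notin> ?Fin"
      proof
        assume "\<omega> \<in> ?Fin"
        then obtain SS where "finite SS" "B t \<omega> = SS" by auto
        with False show False by simp
      qed
      ultimately have "\<omega> \<in> ?R2" by simp
      then show ?thesis by (rule UnI2)
    qed
  next
    fix \<omega> assume w: "\<omega> \<in> ?R1 \<union> ?R2"
    show "\<omega> \<in> ?L"
    proof (cases "\<omega> \<in> ?R1")
      case True
      then obtain SS where "finite SS" "real (card SS) \<le> K" "B t \<omega> = SS" by auto
      then show ?thesis by simp
    next
      case False
      have "\<omega> \<in> ?R1 \<or> \<omega> \<in> ?R2" using w by (simp only: Un_iff)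
      then have "\<omega> \<in> ?R2" using False by (rule or_cancel)
      then have "0 \<le> K" "\<omega> \<notin> ?Fin" by (simp_all split: if_splits)
      have "\<not> finite (B t \<omega>)"
      proof
        assume "finite (B t \<omega>)"
        then have "\<omega> \<in> ?Fin" by (intro UN_I[of "B t \<omega>"]) auto
        with \<open>\<omega> \<notin> ?Fin\<close> show False by simp
      qed
      then show ?thesis using \<open>0 \<le> K\<close> by simp
    qed
  qed
  also have "\<dots> \<in> sets frog_space"
  proof (rule sets.Un)
    show "(\<Union>SS\<in>{SS. finite SS \<and> real (card SS) \<le> K}. {\<omega> \<in> space frog_space. B t \<omega> = SS}) \<in> sets frog_space"
      by (intro sets.countable_UN' countable_subset[OF _ countable_Collect_finite]) (use Beq_sets in auto)
    show "(if 0 \<le> K then space frog_space - ?Fin else {}) \<in> sets frog_space"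
      using sets.compl_sets[OF Fin] by simp
  qed
  finally show ?thesis .
qed

lemma Tlt_sets: "{\<omega> \<in> space frog_space. ereal_of_enat (T 0 x \<omega>) < ereal s} \<in> sets frog_space"
proof -
  have "{\<omega> \<in> space frog_space. ereal_of_enat (T 0 x \<omega>) < ereal s}
      = (\<Union>j\<in>{j. real j < s}. {\<omega> \<in> space frog_space. T 0 x \<omega> \<le> enat j})"
    by (auto simp: ereal_less_iff)
  also have "\<dots> \<in> sets frog_space"
    by (intro sets.countable_UN' countableI_type) (use T_sets in auto)
  finally show ?thesis .
qed

lemma ereal_min: "ereal_of_enat (min a b) = min (ereal_of_enat a) (ereal_of_enat b)"
  by (simp add: min_def)

lemma ev2_sets: "{\<omega> \<in> space frog_space. ereal_of_enat (min (T 0 x \<omega>) (T 0 y \<omega>)) \<ge> ereal s} \<in> sets frog_space"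
proof -
  have "{\<omega> \<in> space frog_space. ereal_of_enat (min (T 0 x \<omega>) (T 0 y \<omega>)) \<ge> ereal s}
      = space frog_space - ({\<omega> \<in> space frog_space. ereal_of_enat (T 0 x \<omega>) < ereal s}
         \<union> {\<omega> \<in> space frog_space. ereal_of_enat (T 0 y \<omega>) < ereal s})"
    by (auto simp: ereal_min not_le)
  also have "\<dots> \<in> sets frog_space"
    by (rule sets.compl_sets[OF sets.Un[OF Tlt_sets Tlt_sets]])
  finally show ?thesis .
qed


definition gam :: real where "gam = 3 / 7168"

lemma expo:
  fixes K t :: real
  assumes K: "1 \<le> K" and t: "8 * K^2 \<le> t"
  defines "m \<equiv> \<lfloor>K / 4\<rfloor>" and "Mb \<equiv> nat \<lceil>4 * K^2 / 3\<rceil>" and "L \<equiv> nat \<lfloor>t / 2\<rfloor>"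
  shows "gam * t / K \<le> real (nat (m + 1) * (L div Mb)) / 48"
proof -
  define nb where "nb = L div Mb"
  have K2: "1 \<le> K^2" using K by (simp add: one_le_power)
  have tpos: "8 \<le> t" using t K2 by linarith
  have h1: "K / 4 \<le> real (nat (m + 1))"
  proof -
    have "K / 4 < real_of_int m + 1" unfolding m_def by linarith
    moreover have "0 \<le> m" unfolding m_def using K by simp
    ultimately show ?thesis by simp
  qed
  have Mb_le: "real Mb \<le> 7 * K^2 / 3"
  proof -
    have "real_of_int \<lceil>4 * K^2 / 3\<rceil> < 4 * K^2 / 3 + 1" by linarith
    moreover have "0 \<le> \<lceil>4 * K^2 / 3\<rceil>" using K2 by simp
    ultimately have "real Mb < 4 * K^2 / 3 + 1" unfolding Mb_def by simp
    then show ?thesis using K2 by linarith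
  qed
  have Mb_pos: "0 < Mb" unfolding Mb_def using K2 K by simp
  have L_ge: "3 * t / 8 \<le> real L"
  proof -
    have "t / 2 - 1 < real_of_int \<lfloor>t / 2\<rfloor>" by linarith
    moreover have "0 \<le> \<lfloor>t / 2\<rfloor>" using tpos by simp
    ultimately have "t / 2 - 1 < real L" unfolding L_def by simp
    then show ?thesis using tpos by linarith
  qed
  have L_Mb: "real Mb \<le> real L" using L_ge Mb_le t by linarith
  then have LMb: "Mb \<le> L" by simp
  have "0 < L div Mb" using LMb Mb_pos by (simp add: div_greater_zero_iff)
  then have nb1: "1 \<le> nb" unfolding nb_def by simp
  have "L < (nb + 1) * Mb"
  proof -
    have "L = nb * Mb + L mod Mb" unfolding nb_def by simp
    moreover have "L mod Mb < Mb" using Mb_pos by simp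
    ultimately show ?thesis by (simp add: algebra_simps)
  qed
  also have "(nb + 1) * Mb \<le> (2 * nb) * Mb" using nb1 by (intro mult_right_mono) auto
  finally have "L \<le> 2 * nb * Mb" by simp
  then have "real L \<le> real (2 * nb * Mb)" by (rule of_nat_mono)
  then have "real L \<le> 2 * real nb * real Mb" by simp
  then have h5: "real L / (2 * real Mb) \<le> real nb" using Mb_pos by (simp add: divide_le_eq algebra_simps)
  have h6: "9 * t / (112 * K^2) \<le> real L / (2 * real Mb)"
  proof -
    have pos2: "0 < (2 * (7 * K^2 / 3)) * (2 * real Mb)" using Mb_pos K2 by (intro mult_pos_pos) auto
    have e1: "9 * t / (112 * K^2) = (3 * t / 8) / (2 * (7 * K^2 / 3))" by (simp add: field_simps)
    have e2: "(3 * t / 8) / (2 * (7 * K^2 / 3)) \<le> real L / (2 * (7 * K^2 / 3))"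
      using L_ge K2 by (intro divide_right_mono) auto
    have e3: "real L / (2 * (7 * K^2 / 3)) \<le> real L / (2 * real Mb)"
      using Mb_le pos2 L_ge tpos by (intro divide_left_mono) auto
    show ?thesis unfolding e1 using order_trans[OF e2 e3] .
  qed
  have nbge: "9 * t / (112 * K^2) \<le> real nb" using h5 h6 by linarith
  have "K / 4 * (9 * t / (112 * K^2)) \<le> real (nat (m + 1)) * real nb"
    using h1 nbge K tpos by (intro mult_mono) auto
  moreover have "K / 4 * (9 * t / (112 * K^2)) = 48 * (gam * t / K)"
    using K by (simp add: gam_def field_simps power2_eq_square)
  ultimately have "48 * (gam * t / K) \<le> real (nat (m + 1)) * real nb" by simp
  then have "gam * t / K \<le> real (nat (m + 1)) * real nb / 48" by linarith
  then show ?thesis unfolding nb_def by simp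
qed

lemma S_diff: "n1 \<le> n2 \<Longrightarrow> S y n2 \<omega> - S y n1 \<omega> = (\<Sum>k\<in>{n1..<n2}. \<omega> (y, k))"
proof -
  assume n: "n1 \<le> n2"
  have "(\<Sum>k<n2. \<omega> (y, k)) = (\<Sum>k\<in>{0..<n1}. \<omega> (y, k)) + (\<Sum>k\<in>{n1..<n2}. \<omega> (y, k))"
    using n by (simp add: atLeast0LessThan[symmetric] sum.atLeastLessThan_concat)
  then show ?thesis by (simp add: S_def atLeast0LessThan)
qed

lemma F_sets:
  assumes Y: "finite Y"
  shows "{\<omega> \<in> space frog_space. \<forall>y\<in>Y. \<forall>b<nb. \<bar>\<Sum>k\<in>{b*M..<(b+1)*M}. real_of_int (\<omega> (y, k))\<bar> \<le> a} \<in> sets frog_space"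
proof -
  let ?KK = "Y \<times> {..<nb * M}"
  let ?Q = "\<lambda>g. \<forall>y\<in>Y. \<forall>b<nb. \<bar>\<Sum>k\<in>{b*M..<(b+1)*M}. real_of_int (g (y, k))\<bar> \<le> a"
  have eq: "(\<Sum>k\<in>{b*M..<(b+1)*M}. real_of_int (restrict \<omega> ?KK (y, k))) = (\<Sum>k\<in>{b*M..<(b+1)*M}. real_of_int (\<omega> (y, k)))"
    if "y \<in> Y" "b < nb" for \<omega> y b
  proof (intro sum.cong refl)
    fix k assume "k \<in> {b*M..<(b+1)*M}"
    moreover have "(b+1) * M \<le> nb * M" using that by (intro mult_right_mono) auto
    ultimately show "real_of_int (restrict \<omega> ?KK (y, k)) = real_of_int (\<omega> (y, k))" using that by auto
  qed
  have "{\<omega> \<in> space frog_space. ?Q \<omega>} = {\<omega> \<in> space frog_space. ?Q (restrict \<omega> ?KK)}"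
    using eq by auto
  also have "\<dots> \<in> sets frog_space" using Y by (intro FC) simp
  finally show ?thesis .
qed

definition Ev :: "real \<Rightarrow> real \<Rightarrow> ((int \<times> nat) \<Rightarrow> int) set" where
  "Ev t K = {\<omega> \<in> space frog_space. real (card (B t \<omega>)) \<le> K}"

lemma Ev_sets: "Ev t K \<in> sets frog_space"
  unfolding Ev_def by (rule card_sets)

lemma confine:
  assumes om: "\<omega> \<in> Om" and cK: "real (card (B t \<omega>)) \<le> K" and Y: "Y \<subseteq> B s \<omega>"
    and nbL: "s + real (nb * M) \<le> t"
  shows "\<forall>y\<in>Y. \<forall>b<nb. \<bar>\<Sum>k\<in>{b*M..<(b+1)*M}. real_of_int (\<omega> (y, k))\<bar> \<le> K"
proof (intro ballI allI impI)
  fix y b assume y: "y \<in> Y" and b: "b < nb"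
  have bM: "(b+1) * M \<le> nb * M" using b by (intro mult_right_mono) auto
  have ys: "y \<in> B s \<omega>" using y Y by auto
  have r1: "b * M \<le> nb * M" using b by (intro mult_right_mono) auto
  have r1': "real (b * M) \<le> real (nb * M)" using r1 by (rule of_nat_mono)
  have r2': "real ((b+1) * M) \<le> real (nb * M)" using bM by (rule of_nat_mono)
  have w1: "S y (b*M) \<omega> \<in> B t \<omega>" by (rule B_walk[OF ys]) (use r1' nbL in linarith)
  have w2: "S y ((b+1)*M) \<omega> \<in> B t \<omega>" by (rule B_walk[OF ys]) (use r2' nbL in linarith)
  have dm: "real_of_int \<bar>S y ((b+1)*M) \<omega> - S y (b*M) \<omega>\<bar> \<le> K - 1" by (rule B_diam[OF om cK w2 w1])
  have d: "S y ((b+1)*M) \<omega> - S y (b*M) \<omega> = (\<Sum>k\<in>{b*M..<(b+1)*M}. \<omega> (y, k))"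
    by (rule S_diff) simp
  have "\<bar>\<Sum>k\<in>{b*M..<(b+1)*M}. real_of_int (\<omega> (y, k))\<bar> = real_of_int \<bar>S y ((b+1)*M) \<omega> - S y (b*M) \<omega>\<bar>"
    unfolding d by simp
  then show "\<bar>\<Sum>k\<in>{b*M..<(b+1)*M}. real_of_int (\<omega> (y, k))\<bar> \<le> K" using dm by linarith
qed


lemma msub: "X1 \<in> sets frog_space \<Longrightarrow> X2 \<in> sets frog_space \<Longrightarrow>
    measure frog_space (X1 \<union> X2) \<le> measure frog_space X1 + measure frog_space X2"
  by (rule measure_subadditive) (auto simp: F.emeasure_finite)

lemma core_step:
  assumes K: "1 \<le> K" and t: "8 * K^2 \<le> t"
  shows "measure frog_space (Ev t K \<inter> Om) \<le> measure frog_space (Ev (t/2) (K/2) \<inter> Om) + 2 * exp (- (gam * t / K))"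
proof -
  define m where "m = \<lfloor>K / 4\<rfloor>"
  define Mb where "Mb = nat \<lceil>4 * K^2 / 3\<rceil>"
  define L where "L = nat \<lfloor>t / 2\<rfloor>"
  define nb where "nb = L div Mb"
  define Fp where "Fp = {\<omega> \<in> space frog_space. \<forall>y\<in>{0..m}. \<forall>b<nb. \<bar>\<Sum>k\<in>{b*Mb..<(b+1)*Mb}. real_of_int (\<omega> (y, k))\<bar> \<le> K}"
  define Fm where "Fm = {\<omega> \<in> space frog_space. \<forall>y\<in>{-m..0}. \<forall>b<nb. \<bar>\<Sum>k\<in>{b*Mb..<(b+1)*Mb}. real_of_int (\<omega> (y, k))\<bar> \<le> K}"
  have K2: "1 \<le> K^2" using K by (simp add: one_le_power)
  have tpos: "0 \<le> t" using t K2 by linarith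
  have m0: "0 \<le> m" unfolding m_def using K by simp
  have mK: "real_of_int m \<le> K / 4" unfolding m_def by linarith
  have Mbpos: "0 < Mb" unfolding Mb_def using K2 K by simp
  have a2: "K^2 \<le> 3 * real Mb / 4"
  proof -
    have "4 * K^2 / 3 \<le> real_of_int \<lceil>4 * K^2 / 3\<rceil>" by (rule le_of_int_ceiling)
    moreover have "0 \<le> \<lceil>4 * K^2 / 3\<rceil>" using K2 by simp
    ultimately have "4 * K^2 / 3 \<le> real Mb" unfolding Mb_def by simp
    then show ?thesis by linarith
  qed
  have nbL: "t / 2 + real (nb * Mb) \<le> t"
  proof -
    have "nb * Mb \<le> L" unfolding nb_def by (rule div_times_less_eq_dividend)
    then have "real (nb * Mb) \<le> real L" by (rule of_nat_mono)
    moreover have "real L \<le> t / 2"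
    proof -
      have "real L = real_of_int \<lfloor>t / 2\<rfloor>" unfolding L_def using tpos by simp
      then show ?thesis using of_int_floor_le[of "t/2"] by linarith
    qed
    ultimately show ?thesis by linarith
  qed
  have incl: "Ev t K \<inter> Om \<subseteq> (Ev (t/2) (K/2) \<inter> Om) \<union> Fp \<union> Fm"
  proof
    fix \<omega> assume w: "\<omega> \<in> Ev t K \<inter> Om"
    then have om: "\<omega> \<in> Om" and cK: "real (card (B t \<omega>)) \<le> K" by (auto simp: Ev_def)
    show "\<omega> \<in> (Ev (t/2) (K/2) \<inter> Om) \<union> Fp \<union> Fm"
    proof (cases "real (card (B (t/2) \<omega>)) \<le> K/2")
      case True then show ?thesis using om by (simp add: Ev_def)
    next
      case False
      then have "real_of_int (2 * m) < real_of_int (int (card (B (t/2) \<omega>)))" using mK by simp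
      then have "2 * m < int (card (B (t/2) \<omega>))" by (simp only: of_int_less_iff)
      then have c: "2 * m + 1 \<le> int (card (B (t/2) \<omega>))" by simp
      have "{0..m} \<subseteq> B (t/2) \<omega> \<or> {-m..0} \<subseteq> B (t/2) \<omega>" by (rule B_side[OF om m0 c])
      then show ?thesis
      proof
        assume Y: "{0..m} \<subseteq> B (t/2) \<omega>"
        have "\<omega> \<in> Fp" unfolding Fp_def using confine[OF om cK Y nbL] by simp
        then show ?thesis by simp
      next
        assume Y: "{-m..0} \<subseteq> B (t/2) \<omega>"
        have "\<omega> \<in> Fm" unfolding Fm_def using confine[OF om cK Y nbL] by simp
        then show ?thesis by simp
      qed
    qed
  qed
  have Fp_sets: "Fp \<in> sets frog_space" unfolding Fp_def by (rule F_sets) simp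
  have Fm_sets: "Fm \<in> sets frog_space" unfolding Fm_def by (rule F_sets) simp
  have E2: "Ev (t/2) (K/2) \<inter> Om \<in> sets frog_space" using Ev_sets Om_sets by (rule sets.Int)
  have s0: "measure frog_space (Ev t K \<inter> Om) \<le> measure frog_space ((Ev (t/2) (K/2) \<inter> Om) \<union> Fp \<union> Fm)"
    by (rule F.finite_measure_mono[OF incl]) (intro sets.Un E2 Fp_sets Fm_sets)
  have s1: "measure frog_space ((Ev (t/2) (K/2) \<inter> Om) \<union> Fp \<union> Fm) \<le> measure frog_space ((Ev (t/2) (K/2) \<inter> Om) \<union> Fp) + measure frog_space Fm"
    by (rule msub) (intro sets.Un E2 Fp_sets, rule Fm_sets)
  have s2: "measure frog_space ((Ev (t/2) (K/2) \<inter> Om) \<union> Fp) \<le> measure frog_space (Ev (t/2) (K/2) \<inter> Om) + measure frog_space Fp"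
    by (rule msub[OF E2 Fp_sets])
  have K0: "0 \<le> K" using K by simp
  have bp: "measure frog_space Fp \<le> exp (- real (card {0..m} * nb) / 48)"
    unfolding Fp_def by (rule block_bound[OF _ Mbpos K0 a2]) simp
  have bm: "measure frog_space Fm \<le> exp (- real (card {-m..0} * nb) / 48)"
    unfolding Fm_def by (rule block_bound[OF _ Mbpos K0 a2]) simp
  have c1: "card {0..m} = nat (m + 1)" by simp
  have c2: "card {-m..0} = nat (m + 1)" by simp
  have ex: "exp (- real (nat (m + 1) * nb) / 48) \<le> exp (- (gam * t / K))"
    using expo[OF K t] unfolding m_def Mb_def L_def nb_def by simp
  show ?thesis using s0 s1 s2 bp bm ex unfolding c1 c2 by linarith
qed

lemma Ev_small: "K < 1 \<Longrightarrow> 0 \<le> t \<Longrightarrow> Ev t K \<inter> Om = {}"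
proof (rule ccontr)
  assume K: "K < 1" and t: "0 \<le> t" and ne: "Ev t K \<inter> Om \<noteq> {}"
  then obtain \<omega> where om: "\<omega> \<in> Om" and c: "real (card (B t \<omega>)) \<le> K" by (auto simp: Ev_def)
  have "0 \<in> B t \<omega>" using t by (rule B_zero)
  then have "card (B t \<omega>) \<noteq> 0" using B_finite[OF om] by auto
  then show False using c K by simp
qed

lemma core_ind:
  "\<forall>t K. K < 2 ^ N \<longrightarrow> 0 < K \<longrightarrow> 8 * K^2 \<le> t \<longrightarrow>
     measure frog_space (Ev t K \<inter> Om) \<le> 2 * real N * exp (- (gam * t / K))"
proof (induction N)
  case 0
  show ?case
  proof (intro allI impI)
    fix t K :: real assume a: "K < 2 ^ 0" "0 < K" "8 * K^2 \<le> t"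
    have "0 \<le> t" using a(3) zero_le_power2[of K] by linarith
    moreover have "K < 1" using a(1) by simp
    ultimately have "Ev t K \<inter> Om = {}" by (intro Ev_small)
    then show "measure frog_space (Ev t K \<inter> Om) \<le> 2 * real 0 * exp (- (gam * t / K))" by simp
  qed
next
  case (Suc N)
  show ?case
  proof (intro allI impI)
    fix t K :: real assume K1: "K < 2 ^ Suc N" and K0: "0 < K" and t: "8 * K^2 \<le> t"
    have tpos: "0 \<le> t" using t zero_le_power2[of K] by linarith
    show "measure frog_space (Ev t K \<inter> Om) \<le> 2 * real (Suc N) * exp (- (gam * t / K))"
    proof (cases "K < 1")
      case True
      then have "Ev t K \<inter> Om = {}" using tpos by (rule Ev_small)
      then show ?thesis by simp
    next
      case False
      then have K: "1 \<le> K" by simp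
      have "K / 2 < 2 ^ N" using K1 by simp
      moreover have "0 < K / 2" using K0 by simp
      moreover have "8 * (K/2)^2 \<le> t / 2"
      proof -
        have e: "8 * (K/2)^2 = 2 * K^2" by (simp add: power_divide)
        show ?thesis using e t zero_le_power2[of K] by linarith
      qed
      ultimately have IH: "measure frog_space (Ev (t/2) (K/2) \<inter> Om) \<le> 2 * real N * exp (- (gam * (t/2) / (K/2)))"
        using Suc.IH by blast
      have eq: "gam * (t/2) / (K/2) = gam * t / K" by simp
      have "measure frog_space (Ev t K \<inter> Om) \<le> measure frog_space (Ev (t/2) (K/2) \<inter> Om) + 2 * exp (- (gam * t / K))"
        by (rule core_step[OF K t])
      also have "\<dots> \<le> 2 * real N * exp (- (gam * t / K)) + 2 * exp (- (gam * t / K))"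
        using IH unfolding eq by simp
      also have "\<dots> = 2 * real (Suc N) * exp (- (gam * t / K))" by (simp add: algebra_simps)
      finally show ?thesis .
    qed
  qed
qed

lemma core:
  assumes K0: "0 < K" and t: "8 * K^2 \<le> t"
  shows "measure frog_space (Ev t K) \<le> 2 * (K + 1) * exp (- (gam * t / K))"
proof -
  define N where "N = nat \<lceil>K\<rceil>"
  have KN: "K \<le> real N" unfolding N_def using K0 by linarith
  have NK: "real N \<le> K + 1" unfolding N_def using K0 by linarith
  have "real N < real (2 ^ N)" by (simp only: of_nat_less_iff) (rule less_exp)
  then have r: "real N < 2 ^ N" by simp
  have "K < 2 ^ N" using KN r by linarith
  then have c: "measure frog_space (Ev t K \<inter> Om) \<le> 2 * real N * exp (- (gam * t / K))"
    using core_ind[of N] K0 t by blast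
  have "measure frog_space (Ev t K) \<le> measure frog_space (Ev t K \<inter> Om)"
    by (rule measure_Om_le[OF Ev_sets])
  also have "\<dots> \<le> 2 * real N * exp (- (gam * t / K))" by (rule c)
  also have "\<dots> \<le> 2 * (K + 1) * exp (- (gam * t / K))"
    using NK by (intro mult_right_mono) auto
  finally show ?thesis .
qed


definition cc :: real where "cc = 3 / 14336"

lemma part1:
  fixes \<delta> A :: real
  assumes d: "\<delta> > 0" and A: "A \<ge> 4 * cc * sqrt \<delta>"
  shows "\<forall>\<^sub>F n in sequentially.
          {\<omega> \<in> space frog_space. real (card (B (\<delta> * real n) \<omega>)) \<le> cc * \<delta> * sqrt (real n) / A}
            \<in> sets frog_space \<and>
          measure frog_space
            {\<omega> \<in> space frog_space. real (card (B (\<delta> * real n) \<omega>)) \<le> cc * \<delta> * sqrt (real n) / A}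
            \<le> exp (- A * sqrt (real n))"
proof -
  have "0 < 4 * cc * sqrt \<delta>" using d by (simp add: cc_def)
  then have Apos: "A > 0" using A by linarith
  have lim: "((\<lambda>n::nat. 2 * (3 / 14336 * \<delta> * sqrt (real n) / A + 1) * exp (- A * sqrt (real n))) \<longlongrightarrow> 0) at_top"
    using Apos d by real_asymp
  have ev1: "\<forall>\<^sub>F n in sequentially. 2 * (cc * \<delta> * sqrt (real n) / A + 1) * exp (- A * sqrt (real n)) < 1"
    using order_tendstoD(2)[OF lim, of 1] unfolding cc_def by simp
  have A2: "16 * cc^2 * \<delta> \<le> A^2"
  proof -
    have "0 \<le> 4 * cc * sqrt \<delta>" using d by (simp add: cc_def)
    then have "(4 * cc * sqrt \<delta>)^2 \<le> A^2" using A by (intro power_mono) auto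
    then show ?thesis using d by (simp add: power_mult_distrib)
  qed
  show ?thesis
    using ev1 eventually_ge_at_top[of "1::nat"]
  proof eventually_elim
    case (elim n)
    define r where "r = sqrt (real n)"
    have r: "r > 0" using elim(2) by (simp add: r_def)
    have nr: "real n = r * r" by (simp add: r_def)
    define K where "K = cc * \<delta> * r / A"
    define t where "t = \<delta> * real n"
    have K0: "0 < K" using r d Apos by (simp add: K_def cc_def)
    have tK: "8 * K^2 \<le> t"
    proof -
      have "8 * K^2 = 8 * cc^2 * \<delta> * (\<delta> * real n) / A^2"
        unfolding K_def nr by (simp add: power2_eq_square field_simps)
      also have "\<dots> \<le> (A^2 / 2) * (\<delta> * real n) / A^2"
        using A2 d elim(2) Apos by (intro divide_right_mono mult_right_mono) auto
      also have "\<dots> \<le> \<delta> * real n" using Apos d by (simp add: field_simps)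
      finally show ?thesis unfolding t_def .
    qed
    have gt: "gam * t / K = 2 * A * r"
      unfolding t_def K_def nr using r d Apos by (simp add: gam_def cc_def field_simps)
    have set_eq: "{\<omega> \<in> space frog_space. real (card (B (\<delta> * real n) \<omega>)) \<le> cc * \<delta> * sqrt (real n) / A} = Ev t K"
      unfolding Ev_def t_def K_def r_def ..
    have "measure frog_space (Ev t K) \<le> 2 * (K + 1) * exp (- (gam * t / K))" by (rule core[OF K0 tK])
    also have "\<dots> = (2 * (K + 1) * exp (- A * r)) * exp (- A * r)"
      unfolding gt by (simp add: exp_add[symmetric])
    also have "\<dots> \<le> 1 * exp (- A * r)"
      using elim(1) unfolding K_def r_def by (intro mult_right_mono) auto
    finally have "measure frog_space (Ev t K) \<le> exp (- A * sqrt (real n))" by (simp add: r_def)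
    then show ?case unfolding set_eq using Ev_sets by simp
  qed
qed


lemma incl2:
  assumes om: "\<omega> \<in> Om" and m0: "0 \<le> m" and mK: "2 * real_of_int m \<le> K" and K0: "0 \<le> K"
    and ts: "t < s"
    and ge: "ereal_of_enat (min (T 0 m \<omega>) (T 0 (- m) \<omega>)) \<ge> ereal s"
  shows "real (card (B t \<omega>)) \<le> K"
proof -
  have s1: "ereal s \<le> ereal_of_enat (T 0 m \<omega>)" and s2: "ereal s \<le> ereal_of_enat (T 0 (- m) \<omega>)"
    using ge by (auto simp: ereal_min)
  have nm: "m \<notin> B t \<omega>"
  proof
    assume "m \<in> B t \<omega>"
    then have "ereal_of_enat (T 0 m \<omega>) \<le> ereal t" by (simp add: B_mem)
    then have "ereal s \<le> ereal t" using s1 by (rule order_trans[rotated])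
    with ts show False by simp
  qed
  have nm2: "- m \<notin> B t \<omega>"
  proof
    assume "- m \<in> B t \<omega>"
    then have "ereal_of_enat (T 0 (- m) \<omega>) \<le> ereal t" by (simp add: B_mem)
    then have "ereal s \<le> ereal t" using s2 by (rule order_trans[rotated])
    with ts show False by simp
  qed
  have sub: "B t \<omega> \<subseteq> {-m+1..m-1}"
  proof
    fix x assume x: "x \<in> B t \<omega>"
    show "x \<in> {-m+1..m-1}"
    proof (rule ccontr)
      assume "x \<notin> {-m+1..m-1}"
      then have "m \<le> x \<or> x \<le> - m" by auto
      then show False
      proof
        assume "m \<le> x"
        then have "m \<in> B t \<omega>" using B_between[OF om x, of m] m0 by simp
        with nm show False by simp
      next
        assume "x \<le> - m"
        then have "- m \<in> B t \<omega>" using B_between[OF om x, of "- m"] m0 by simp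
        with nm2 show False by simp
      qed
    qed
  qed
  have "card (B t \<omega>) \<le> card {-m+1..m-1}" using sub by (intro card_mono) auto
  then have "card (B t \<omega>) \<le> nat (2 * m - 1)" by simp
  then have "real (card (B t \<omega>)) \<le> real (nat (2 * m - 1))" by (rule of_nat_mono)
  also have "\<dots> \<le> K" using mK K0 by (cases "m = 0") auto
  finally show ?thesis .
qed

lemma part2:
  fixes \<eta> A :: real
  assumes e: "\<eta> > 0" and Apos: "A > 0" and A: "A \<ge> 32 * cc * \<eta>"
  shows "\<forall>\<^sub>F n in sequentially.
          {\<omega> \<in> space frog_space.
             ereal_of_enat (min (T 0 \<lfloor>\<eta> * sqrt (real n)\<rfloor> \<omega>) (T 0 (- \<lfloor>\<eta> * sqrt (real n)\<rfloor>) \<omega>))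
               \<ge> ereal (2 * A * \<eta> * real n / cc)} \<in> sets frog_space \<and>
          measure frog_space
            {\<omega> \<in> space frog_space.
             ereal_of_enat (min (T 0 \<lfloor>\<eta> * sqrt (real n)\<rfloor> \<omega>) (T 0 (- \<lfloor>\<eta> * sqrt (real n)\<rfloor>) \<omega>))
               \<ge> ereal (2 * A * \<eta> * real n / cc)}
            \<le> exp (- A * sqrt (real n))"
proof -
  have lim: "((\<lambda>n::nat. 2 * (2 * \<eta> * sqrt (real n) + 1) *
      exp (- (3 / 7168 * (2 * A * \<eta> * real n / (3 / 14336) - 1) / (2 * \<eta> * sqrt (real n)))) * exp (A * sqrt (real n))) \<longlongrightarrow> 0) at_top"
    using Apos e by real_asymp
  have ev1: "\<forall>\<^sub>F n in sequentially. 2 * (2 * \<eta> * sqrt (real n) + 1) *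
      exp (- (gam * (2 * A * \<eta> * real n / cc - 1) / (2 * \<eta> * sqrt (real n)))) * exp (A * sqrt (real n)) < 1"
    using order_tendstoD(2)[OF lim, of 1] unfolding cc_def gam_def by simp
  have ev2: "\<forall>\<^sub>F n in sequentially. 1 \<le> 32 * \<eta>^2 * real n"
  proof -
    have "filterlim (\<lambda>n::nat. 32 * \<eta>^2 * real n) at_top at_top" using e by real_asymp
    then show ?thesis unfolding filterlim_at_top by blast
  qed
  have sA: "64 * \<eta>^2 \<le> 2 * A * \<eta> / cc"
  proof -
    have "64 * \<eta>^2 = 2 * (32 * cc * \<eta>) * \<eta> / cc" by (simp add: cc_def power2_eq_square)
    also have "\<dots> \<le> 2 * A * \<eta> / cc" using A e by (intro divide_right_mono mult_right_mono) (auto simp: cc_def)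
    finally show ?thesis .
  qed
  show ?thesis
    using ev1 ev2 eventually_ge_at_top[of "1::nat"]
  proof eventually_elim
    case (elim n)
    define r where "r = sqrt (real n)"
    have r: "r > 0" using elim(3) by (simp add: r_def)
    have nr: "real n = r * r" by (simp add: r_def)
    define s where "s = 2 * A * \<eta> * real n / cc"
    define m where "m = \<lfloor>\<eta> * sqrt (real n)\<rfloor>"
    define K where "K = 2 * \<eta> * r"
    define t where "t = s - 1"
    let ?E = "{\<omega> \<in> space frog_space. ereal_of_enat (min (T 0 m \<omega>) (T 0 (- m) \<omega>)) \<ge> ereal s}"
    have Esets: "?E \<in> sets frog_space" by (rule ev2_sets)
    have K0: "0 < K" using r e by (simp add: K_def)
    have m0: "0 \<le> m" unfolding m_def using e by simp
    have mK: "2 * real_of_int m \<le> K" unfolding m_def K_def r_def by linarith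
    have s64: "64 * \<eta>^2 * real n \<le> s"
    proof -
      have "64 * \<eta>^2 * real n \<le> (2 * A * \<eta> / cc) * real n" using sA by (rule mult_right_mono) simp
      also have "\<dots> = s" unfolding s_def by simp
      finally show ?thesis .
    qed
    have tK: "8 * K^2 \<le> t"
    proof -
      have "8 * K^2 = 32 * \<eta>^2 * real n" unfolding K_def nr by (simp add: power2_eq_square)
      then show ?thesis unfolding t_def using s64 elim(2) by linarith
    qed
    have incl: "?E \<inter> Om \<subseteq> Ev t K"
    proof
      fix \<omega> assume w: "\<omega> \<in> ?E \<inter> Om"
      have "real (card (B t \<omega>)) \<le> K"
        by (rule incl2[of \<omega> m K t s]) (use w m0 mK K0 in \<open>auto simp: t_def\<close>)
      then show "\<omega> \<in> Ev t K" by (simp add: Ev_def)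
    qed
    have gt: "gam * t / K = 2 * A * r - gam / (2 * \<eta> * r)"
      unfolding t_def s_def K_def nr using r e Apos by (simp add: gam_def cc_def field_simps)
    have "measure frog_space ?E \<le> measure frog_space (?E \<inter> Om)" by (rule measure_Om_le[OF Esets])
    also have "\<dots> \<le> measure frog_space (Ev t K)" using incl Ev_sets by (rule F.finite_measure_mono)
    also have "\<dots> \<le> 2 * (K + 1) * exp (- (gam * t / K))" by (rule core[OF K0 tK])
    also have "\<dots> = (2 * (K + 1) * exp (- (gam * t / K)) * exp (A * r)) * exp (- A * r)"
      by (simp add: exp_add[symmetric])
    also have "\<dots> \<le> 1 * exp (- A * r)"
      using elim(1) unfolding K_def r_def t_def s_def by (intro mult_right_mono) auto
    finally have "measure frog_space ?E \<le> exp (- A * sqrt (real n))" by (simp add: r_def)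
    then show ?case using Esets unfolding s_def m_def by simp
  qed
qed


theorem lemma2p6:
  shows "\<exists>c::real. 0 < c \<and> c < 1/64 \<and>
    (\<forall>\<delta>::real. \<forall>A::real. \<delta> > 0 \<longrightarrow> A \<ge> 4 * c * sqrt \<delta> \<longrightarrow>
       (\<forall>\<^sub>F n in sequentially.
          {\<omega> \<in> space frog_space. real (card (B (\<delta> * real n) \<omega>)) \<le> c * \<delta> * sqrt (real n) / A}
            \<in> sets frog_space \<and>
          measure frog_space
            {\<omega> \<in> space frog_space. real (card (B (\<delta> * real n) \<omega>)) \<le> c * \<delta> * sqrt (real n) / A}
            \<le> exp (- A * sqrt (real n)))) \<and>
    (\<forall>\<eta>::real. \<forall>A::real. \<eta> > 0 \<longrightarrow> A > 0 \<longrightarrow> A \<ge> 32 * c * \<eta> \<longrightarrow>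
       (\<forall>\<^sub>F n in sequentially.
          {\<omega> \<in> space frog_space.
             ereal_of_enat (min (T 0 \<lfloor>\<eta> * sqrt (real n)\<rfloor> \<omega>) (T 0 (- \<lfloor>\<eta> * sqrt (real n)\<rfloor>) \<omega>))
               \<ge> ereal (2 * A * \<eta> * real n / c)} \<in> sets frog_space \<and>
          measure frog_space
            {\<omega> \<in> space frog_space.
             ereal_of_enat (min (T 0 \<lfloor>\<eta> * sqrt (real n)\<rfloor> \<omega>) (T 0 (- \<lfloor>\<eta> * sqrt (real n)\<rfloor>) \<omega>))
               \<ge> ereal (2 * A * \<eta> * real n / c)}
            \<le> exp (- A * sqrt (real n))))"
  proof (intro exI[of _ cc] conjI allI impI)
  show "0 < cc" by (simp add: cc_def)
  show "cc < 1/64" by (simp add: cc_def)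
next
  fix \<delta> A :: real assume "\<delta> > 0" "A \<ge> 4 * cc * sqrt \<delta>"
  then show "\<forall>\<^sub>F n in sequentially.
          {\<omega> \<in> space frog_space. real (card (B (\<delta> * real n) \<omega>)) \<le> cc * \<delta> * sqrt (real n) / A}
            \<in> sets frog_space \<and>
          measure frog_space
            {\<omega> \<in> space frog_space. real (card (B (\<delta> * real n) \<omega>)) \<le> cc * \<delta> * sqrt (real n) / A}
            \<le> exp (- A * sqrt (real n))" by (rule part1)
next
  fix \<eta> A :: real assume "\<eta> > 0" "A > 0" "A \<ge> 32 * cc * \<eta>"
  then show "\<forall>\<^sub>F n in sequentially.
          {\<omega> \<in> space frog_space.
             ereal_of_enat (min (T 0 \<lfloor>\<eta> * sqrt (real n)\<rfloor> \<omega>) (T 0 (- \<lfloor>\<eta> * sqrt (real n)\<rfloor>) \<omega>))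
               \<ge> ereal (2 * A * \<eta> * real n / cc)} \<in> sets frog_space \<and>
          measure frog_space
            {\<omega> \<in> space frog_space.
             ereal_of_enat (min (T 0 \<lfloor>\<eta> * sqrt (real n)\<rfloor> \<omega>) (T 0 (- \<lfloor>\<eta> * sqrt (real n)\<rfloor>) \<omega>))
               \<ge> ereal (2 * A * \<eta> * real n / cc)}
            \<le> exp (- A * sqrt (real n))" by (rule part2)
qed

end
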